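(* Let $I\subseteq[n]$ be such that $\dim F_I=n-|I|$. For $b\in\mathbb R_{>0}$ let $S_b=\{\gamma\in\Phi\mid c_i(\gamma)=m_i/b\ \text{for all } i\in I\}$, and let $d$ be the maximal positive number such that $S_d\neq\emptyset$. Then: (1) $S_d$ has a minimum $\alpha$ in the root poset, and $\{\alpha\}\cup(\Pi\setminus\Pi_I)$ is a root basis of $\overline{\Phi(V_I)}$; (2) $\Phi(V_I)=\overline{\Phi(V_I)}$ if and only if $d=1$. In particular, if $\gcd\{m_i\mid i\in I\}=1$, then $\Phi(V_I)=\overline{\Phi(V_I)}$.
   Context: $\Phi$ is a finite irreducible crystallographic root system of rank $n$ with inner product $(-,-)$, basis $\Pi=\{\alpha_1,\dots,\alpha_n\}$, positive roots $\Phi^+$, highest root $\theta=\sum_i m_i\alpha_i$, Weyl group $W$. For $\beta\in\Phi$, $\beta=\sum_i c_i(\beta)\alpha_i$. The root poset is $\Phi^+$ with $\beta\ge\gamma$ iff $\beta-\gamma$ is a nonnegative integer combination of simple roots. $\breve\omega_i$ is the fundamental coweight ($(\alpha_j,\breve\omega_i)=\delta_{ij}$). For $I\subseteq[n]$: $\Pi_I=\{\alpha_i\mid i\in I\}$, $V_I=\{\beta\in\Phi^+\mid(\beta,\breve\omega_i)=m_i\ \forall i\in I\}$, $F_I=\operatorname{conv}(V_I)$ (a face of $\operatorname{conv}(\Phi)$). For $\Gamma\subseteq\Phi$, $\Phi(\Gamma)=\{w(\gamma)\mid w\in W\langle\Gamma\rangle,\gamma\in\Gamma\}$ is the root subsystem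 generated by $\Gamma$ ($W\langle\Gamma\rangle$ generated by reflections $s_\gamma$, $\gamma\in\Gamma$), and for a subsystem $\Phi'$, $\overline{\Phi'}=\operatorname{span}_{\mathbb R}\Phi'\cap\Phi$ is its parabolic closure. A root basis of a root subsystem is a basis of it in the sense of root systems. *)

theory Defs
  imports "HOL-Analysis.Analysis"
begin

definition reflect :: "'a::euclidean_space \<Rightarrow> 'a \<Rightarrow> 'a" where
  "reflect a x = x - (2 * (x \<bullet> a) / (a \<bullet> a)) *\<^sub>R a"

definition crystallographic_root_system :: "'a::euclidean_space set \<Rightarrow> bool" where
  "crystallographic_root_system \<Phi> \<longleftrightarrow>
     finite \<Phi> \<and> 0 \<notin> \<Phi> \<and> span \<Phi> = UNIV \<and>
     (\<forall>a\<in>\<Phi>. \<forall>b\<in>\<Phi>. reflect a b \<in> \<Phi>) \<and>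
     (\<forall>a\<in>\<Phi>. \<forall>b\<in>\<Phi>. 2 * (b \<bullet> a) / (a \<bullet> a) \<in> \<int>) \<and>
     (\<forall>a\<in>\<Phi>. \<forall>c::real. c *\<^sub>R a \<in> \<Phi> \<longrightarrow> c = 1 \<or> c = -1)"

definition irreducible_root_system :: "'a::euclidean_space set \<Rightarrow> bool" where
  "irreducible_root_system \<Phi> \<longleftrightarrow>
     \<not> (\<exists>A B. A \<noteq> {} \<and> B \<noteq> {} \<and> A \<union> B = \<Phi> \<and> A \<inter> B = {} \<and>
            (\<forall>a\<in>A. \<forall>b\<in>B. a \<bullet> b = 0))"

definition is_root_basis :: "'a::euclidean_space set \<Rightarrow> 'a set \<Rightarrow> bool" where
  "is_root_basis \<Psi> B \<longleftrightarrow>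
     B \<subseteq> \<Psi> \<and> independent B \<and>
     (\<forall>\<beta>\<in>\<Psi>. \<exists>c. (\<forall>b\<in>B. c b \<in> \<int>) \<and> ((\<forall>b\<in>B. c b \<ge> 0) \<or> (\<forall>b\<in>B. c b \<le> 0)) \<and>
              \<beta> = (\<Sum>b\<in>B. c b *\<^sub>R b))"

definition simple_roots :: "'a::euclidean_space set \<Rightarrow> (nat \<Rightarrow> 'a) \<Rightarrow> nat \<Rightarrow> bool" where
  "simple_roots \<Phi> \<alpha> n \<longleftrightarrow> n = DIM('a) \<and> inj_on \<alpha> {1..n} \<and> is_root_basis \<Phi> (\<alpha> ` {1..n})"

definition coeff :: "(nat \<Rightarrow> 'a::euclidean_space) \<Rightarrow> nat \<Rightarrow> 'a \<Rightarrow> nat \<Rightarrow> real" where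
  "coeff \<alpha> n \<beta> = (THE c. (\<forall>j. j \<notin> {1..n} \<longrightarrow> c j = 0) \<and> \<beta> = (\<Sum>j=1..n. c j *\<^sub>R \<alpha> j))"

definition coweight :: "(nat \<Rightarrow> 'a::euclidean_space) \<Rightarrow> nat \<Rightarrow> nat \<Rightarrow> 'a" where
  "coweight \<alpha> n i = (THE w. \<forall>j\<in>{1..n}. \<alpha> j \<bullet> w = (if j = i then 1 else 0))"

definition pos_roots :: "'a::euclidean_space set \<Rightarrow> (nat \<Rightarrow> 'a) \<Rightarrow> nat \<Rightarrow> 'a set" where
  "pos_roots \<Phi> \<alpha> n = {\<beta>\<in>\<Phi>. \<forall>i\<in>{1..n}. coeff \<alpha> n \<beta> i \<ge> 0}"

definition root_le :: "(nat \<Rightarrow> 'a::euclidean_space) \<Rightarrow> nat \<Rightarrow> 'a \<Rightarrow> 'a \<Rightarrow> bool" where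
  "root_le \<alpha> n \<beta> \<gamma> \<longleftrightarrow> (\<forall>i\<in>{1..n}. coeff \<alpha> n \<gamma> i - coeff \<alpha> n \<beta> i \<in> \<nat>)"

definition highest_root :: "'a::euclidean_space set \<Rightarrow> (nat \<Rightarrow> 'a) \<Rightarrow> nat \<Rightarrow> 'a" where
  "highest_root \<Phi> \<alpha> n =
     (THE \<theta>. \<theta> \<in> pos_roots \<Phi> \<alpha> n \<and> (\<forall>\<beta>\<in>pos_roots \<Phi> \<alpha> n. root_le \<alpha> n \<beta> \<theta>))"

definition hmult :: "'a::euclidean_space set \<Rightarrow> (nat \<Rightarrow> 'a) \<Rightarrow> nat \<Rightarrow> nat \<Rightarrow> real" where
  "hmult \<Phi> \<alpha> n i = coeff \<alpha> n (highest_root \<Phi> \<alpha> n) i"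

definition face_vertices :: "'a::euclidean_space set \<Rightarrow> (nat \<Rightarrow> 'a) \<Rightarrow> nat \<Rightarrow> nat set \<Rightarrow> 'a set" where
  "face_vertices \<Phi> \<alpha> n I =
     {\<beta>\<in>pos_roots \<Phi> \<alpha> n. \<forall>i\<in>I. \<beta> \<bullet> coweight \<alpha> n i = hmult \<Phi> \<alpha> n i}"

inductive_set weyl_group :: "'a::euclidean_space set \<Rightarrow> ('a \<Rightarrow> 'a) set" for \<Gamma> where
  weyl_id: "id \<in> weyl_group \<Gamma>"
| weyl_step: "w \<in> weyl_group \<Gamma> \<Longrightarrow> \<gamma> \<in> \<Gamma> \<Longrightarrow> reflect \<gamma> \<circ> w \<in> weyl_group \<Gamma>"

definition gen_subsystem :: "'a::euclidean_space set \<Rightarrow> 'a set" where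
  "gen_subsystem \<Gamma> = {w \<gamma> | w \<gamma>. w \<in> weyl_group \<Gamma> \<and> \<gamma> \<in> \<Gamma>}"

definition par_closure :: "'a::euclidean_space set \<Rightarrow> 'a set \<Rightarrow> 'a set" where
  "par_closure \<Phi> \<Psi> = span \<Psi> \<inter> \<Phi>"

definition S_set :: "'a::euclidean_space set \<Rightarrow> (nat \<Rightarrow> 'a) \<Rightarrow> nat \<Rightarrow> nat set \<Rightarrow> real \<Rightarrow> 'a set" where
  "S_set \<Phi> \<alpha> n I b = {\<gamma>\<in>\<Phi>. \<forall>i\<in>I. coeff \<alpha> n \<gamma> i = hmult \<Phi> \<alpha> n i / b}"

end

theory Submission
  imports Defs
begin



lemma orth_span: "x \<in> span S \<Longrightarrow> (\<And>y. y \<in> S \<Longrightarrow> y \<bullet> v = 0) \<Longrightarrow> x \<bullet> v = 0"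
  using orthogonal_to_span[of x S v] by (simp add: orthogonal_def inner_commute)

locale RS =
  fixes \<Phi> :: "'a::euclidean_space set" and \<alpha> :: "nat \<Rightarrow> 'a" and n :: nat
  assumes crys: "crystallographic_root_system \<Phi>" and sr: "simple_roots \<Phi> \<alpha> n"
begin

lemma finPhi: "finite \<Phi>" and zPhi: "0 \<notin> \<Phi>" and spPhi: "span \<Phi> = UNIV"
  and reflPhi: "a \<in> \<Phi> \<Longrightarrow> b \<in> \<Phi> \<Longrightarrow> reflect a b \<in> \<Phi>"
  and cartan: "a \<in> \<Phi> \<Longrightarrow> b \<in> \<Phi> \<Longrightarrow> 2 * (b \<bullet> a) / (a \<bullet> a) \<in> \<int>"
  and reduced: "a \<in> \<Phi> \<Longrightarrow> c *\<^sub>R a \<in> \<Phi> \<Longrightarrow> c = 1 \<or> c = -1"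
  using crys unfolding crystallographic_root_system_def by auto

lemma n_dim: "n = DIM('a)" and inj\<alpha>: "inj_on \<alpha> {1..n}" and rb: "is_root_basis \<Phi> (\<alpha> ` {1..n})"
  using sr unfolding simple_roots_def by auto

lemma Pi_sub: "\<alpha> ` {1..n} \<subseteq> \<Phi>" and indepPi: "independent (\<alpha> ` {1..n})"
  using rb unfolding is_root_basis_def by auto

lemma alpha_in: "j \<in> {1..n} \<Longrightarrow> \<alpha> j \<in> \<Phi>" using Pi_sub by auto

lemma alpha_nz: "j \<in> {1..n} \<Longrightarrow> \<alpha> j \<noteq> 0" using alpha_in zPhi by metis

lemma neg_refl: "reflect a a = - a" if "a \<noteq> 0"
proof -
  have "reflect a a = a - 2 *\<^sub>R a" using that by (simp add: reflect_def)
  also have "\<dots> = - a" by (simp add: scaleR_2)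
  finally show ?thesis .
qed

lemma negPhi: "a \<in> \<Phi> \<Longrightarrow> - a \<in> \<Phi>"
  by (metis neg_refl reflPhi zPhi)

lemma reflect_invol: "a \<noteq> 0 \<Longrightarrow> reflect a (reflect a x) = x"
  by (simp add: reflect_def inner_diff_left algebra_simps)

lemma span_Pi: "span (\<alpha> ` {1..n}) = UNIV"
proof -
  have "\<Phi> \<subseteq> span (\<alpha> ` {1..n})"
  proof
    fix \<beta> assume "\<beta> \<in> \<Phi>"
    then obtain c where "\<beta> = (\<Sum>b\<in>\<alpha> ` {1..n}. c b *\<^sub>R b)"
      using rb unfolding is_root_basis_def by blast
    then show "\<beta> \<in> span (\<alpha> ` {1..n})"
      by (simp add: span_base span_scale span_sum)
  qed
  then have "span \<Phi> \<subseteq> span (\<alpha> ` {1..n})" by (rule span_minimal[OF _ subspace_span])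
  then show ?thesis using spPhi by auto
qed

lemma expand_ex: "\<exists>c. x = (\<Sum>j=1..n. c j *\<^sub>R \<alpha> j)"
proof -
  have "x \<in> span (\<alpha> ` {1..n})" using span_Pi by auto
  then obtain u where "x = (\<Sum>v\<in>\<alpha> ` {1..n}. u v *\<^sub>R v)"
    using span_finite[of "\<alpha> ` {1..n}"] by auto
  also have "\<dots> = (\<Sum>j=1..n. u (\<alpha> j) *\<^sub>R \<alpha> j)"
    using sum.reindex[OF inj\<alpha>, of "\<lambda>v. u v *\<^sub>R v"] by simp
  finally show ?thesis by (intro exI[of _ "\<lambda>j. u (\<alpha> j)"])
qed

lemma expand_uniq:
  assumes "(\<Sum>j=1..n. c j *\<^sub>R \<alpha> j) = (\<Sum>j=1..n. d j *\<^sub>R \<alpha> j)" "j \<in> {1..n}"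
  shows "c j = d j"
proof -
  let ?u = "\<lambda>v. c (inv_into {1..n} \<alpha> v) - d (inv_into {1..n} \<alpha> v)"
  have "(\<Sum>v\<in>\<alpha> ` {1..n}. ?u v *\<^sub>R v) = (\<Sum>j=1..n. ?u (\<alpha> j) *\<^sub>R \<alpha> j)"
    using sum.reindex[OF inj\<alpha>, of "\<lambda>v. ?u v *\<^sub>R v"] by simp
  also have "\<dots> = (\<Sum>j=1..n. (c j - d j) *\<^sub>R \<alpha> j)"
  proof (rule sum.cong)
    fix j assume "j \<in> {1..n}"
    then have "inv_into {1..n} \<alpha> (\<alpha> j) = j" by (rule inv_into_f_f[OF inj\<alpha>])
    then show "?u (\<alpha> j) *\<^sub>R \<alpha> j = (c j - d j) *\<^sub>R \<alpha> j" by simp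
  qed simp
  also have "\<dots> = 0" using assms(1) by (simp add: scaleR_diff_left sum_subtractf)
  finally have z: "(\<Sum>v\<in>\<alpha> ` {1..n}. ?u v *\<^sub>R v) = 0" .
  have "\<forall>v\<in>\<alpha> ` {1..n}. ?u v = 0"
    using indepPi z unfolding independent_explicit by (elim conjE allE[of _ ?u]) simp
  then have "?u (\<alpha> j) = 0" using assms(2) by blast
  moreover have "inv_into {1..n} \<alpha> (\<alpha> j) = j" using assms(2) by (rule inv_into_f_f[OF inj\<alpha>])
  ultimately show ?thesis by simp
qed

lemma coeff_eq:
  assumes "x = (\<Sum>j=1..n. c j *\<^sub>R \<alpha> j)"
  shows "coeff \<alpha> n x = (\<lambda>j. if j \<in> {1..n} then c j else 0)"
  unfolding coeff_def
proof (rule the_equality)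
  show "(\<forall>j. j \<notin> {1..n} \<longrightarrow> (if j \<in> {1..n} then c j else 0) = 0) \<and>
    x = (\<Sum>j = 1..n. (if j \<in> {1..n} then c j else 0) *\<^sub>R \<alpha> j)"
    using assms by auto
next
  fix e assume e: "(\<forall>j. j \<notin> {1..n} \<longrightarrow> e j = 0) \<and> x = (\<Sum>j = 1..n. e j *\<^sub>R \<alpha> j)"
  show "e = (\<lambda>j. if j \<in> {1..n} then c j else 0)"
  proof
    fix j show "e j = (if j \<in> {1..n} then c j else 0)"
      using e expand_uniq[of e c j] assms by auto
  qed
qed

lemma coeff_expand: "x = (\<Sum>j=1..n. coeff \<alpha> n x j *\<^sub>R \<alpha> j)"
proof -
  obtain c where c: "x = (\<Sum>j=1..n. c j *\<^sub>R \<alpha> j)" using expand_ex by blast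
  show ?thesis using coeff_eq[OF c] c by simp
qed

lemma coeff_out: "j \<notin> {1..n} \<Longrightarrow> coeff \<alpha> n x j = 0"
proof -
  obtain c where c: "x = (\<Sum>j=1..n. c j *\<^sub>R \<alpha> j)" using expand_ex by blast
  assume "j \<notin> {1..n}" then show ?thesis using coeff_eq[OF c] by auto
qed

lemma coeff_linear: "linear (\<lambda>x. coeff \<alpha> n x i)"
proof (rule linearI)
  fix x y
  have "x + y = (\<Sum>j=1..n. (coeff \<alpha> n x j + coeff \<alpha> n y j) *\<^sub>R \<alpha> j)"
    by (subst coeff_expand[of x], subst coeff_expand[of y]) (simp add: scaleR_add_left sum.distrib)
  from coeff_eq[OF this] show "coeff \<alpha> n (x + y) i = coeff \<alpha> n x i + coeff \<alpha> n y i"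
    by (simp add: coeff_out)
next
  fix r and x :: 'a
  have "r *\<^sub>R x = (\<Sum>j=1..n. (r * coeff \<alpha> n x j) *\<^sub>R \<alpha> j)"
    by (subst coeff_expand[of x]) (simp add: scaleR_sum_right)
  from coeff_eq[OF this] show "coeff \<alpha> n (r *\<^sub>R x) i = r *\<^sub>R coeff \<alpha> n x i"
    by (simp add: coeff_out)
qed

lemma coeff_add: "coeff \<alpha> n (x + y) i = coeff \<alpha> n x i + coeff \<alpha> n y i"
  using linear_add[OF coeff_linear] by blast
lemma coeff_diff: "coeff \<alpha> n (x - y) i = coeff \<alpha> n x i - coeff \<alpha> n y i"
  using linear_diff[OF coeff_linear] by blast
lemma coeff_scale: "coeff \<alpha> n (r *\<^sub>R x) i = r * coeff \<alpha> n x i"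
  using linear_scale[OF coeff_linear] by simp
lemma coeff_neg: "coeff \<alpha> n (- x) i = - coeff \<alpha> n x i"
  using linear_neg[OF coeff_linear] by blast
lemma coeff_zero: "coeff \<alpha> n 0 i = 0"
  using linear_0[OF coeff_linear] by blast
lemma coeff_sum: "coeff \<alpha> n (\<Sum>x\<in>A. f x) i = (\<Sum>x\<in>A. coeff \<alpha> n (f x) i)"
  using linear_sum[OF coeff_linear] by blast

lemma coeff_alpha: "k \<in> {1..n} \<Longrightarrow> coeff \<alpha> n (\<alpha> k) i = (if i = k then 1 else 0)"
proof -
  assume k: "k \<in> {1..n}"
  have "\<alpha> k = (\<Sum>j=1..n. (if j = k then 1 else 0) *\<^sub>R \<alpha> j)"
  proof -
    have "(\<Sum>j=1..n. (if j = k then 1 else 0) *\<^sub>R \<alpha> j) = (\<Sum>j=1..n. if j = k then \<alpha> j else 0)"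
      by (rule sum.cong) auto
    then show ?thesis using k by simp
  qed
  from coeff_eq[OF this] show ?thesis using k by auto
qed

lemma eq_by_coeff: "(\<And>i. i \<in> {1..n} \<Longrightarrow> coeff \<alpha> n x i = coeff \<alpha> n y i) \<Longrightarrow> x = y"
  by (subst coeff_expand[of x], subst coeff_expand[of y]) (rule sum.cong, auto)

lemma root_coeff:
  assumes "\<beta> \<in> \<Phi>"
  shows "\<forall>i. coeff \<alpha> n \<beta> i \<in> \<int>"
    and "(\<forall>i\<in>{1..n}. coeff \<alpha> n \<beta> i \<ge> 0) \<or> (\<forall>i\<in>{1..n}. coeff \<alpha> n \<beta> i \<le> 0)"
proof -
  obtain c where c: "\<forall>b\<in>\<alpha> ` {1..n}. c b \<in> \<int>"
    "(\<forall>b\<in>\<alpha> ` {1..n}. c b \<ge> 0) \<or> (\<forall>b\<in>\<alpha> ` {1..n}. c b \<le> 0)"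
    "\<beta> = (\<Sum>b\<in>\<alpha> ` {1..n}. c b *\<^sub>R b)"
    using rb assms unfolding is_root_basis_def by blast
  have "\<beta> = (\<Sum>j=1..n. c (\<alpha> j) *\<^sub>R \<alpha> j)"
    using c(3) sum.reindex[OF inj\<alpha>, of "\<lambda>v. c v *\<^sub>R v"] by simp
  from coeff_eq[OF this] have e: "coeff \<alpha> n \<beta> = (\<lambda>j. if j \<in> {1..n} then c (\<alpha> j) else 0)" .
  show "\<forall>i. coeff \<alpha> n \<beta> i \<in> \<int>" using c(1) by (simp add: e)
  show "(\<forall>i\<in>{1..n}. coeff \<alpha> n \<beta> i \<ge> 0) \<or> (\<forall>i\<in>{1..n}. coeff \<alpha> n \<beta> i \<le> 0)"
    using c(2) by (auto simp: e)
qed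

definition cw :: "nat \<Rightarrow> 'a" where "cw i = (\<Sum>b\<in>Basis. coeff \<alpha> n b i *\<^sub>R b)"

lemma cw_inner: "x \<bullet> cw i = coeff \<alpha> n x i"
proof -
  have "x \<bullet> cw i = (\<Sum>b\<in>Basis. coeff \<alpha> n b i * (x \<bullet> b))"
    by (simp add: cw_def inner_sum_right mult.commute)
  also have "\<dots> = coeff \<alpha> n (\<Sum>b\<in>Basis. (x \<bullet> b) *\<^sub>R b) i"
    by (simp add: coeff_sum coeff_scale mult.commute)
  also have "\<dots> = coeff \<alpha> n x i" by (simp add: euclidean_representation)
  finally show ?thesis .
qed

lemma coweight_inner: "i \<in> {1..n} \<Longrightarrow> x \<bullet> coweight \<alpha> n i = coeff \<alpha> n x i"
proof -
  assume i: "i \<in> {1..n}"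
  have "coweight \<alpha> n i = cw i" unfolding coweight_def
  proof (rule the_equality)
    show "\<forall>j\<in>{1..n}. \<alpha> j \<bullet> cw i = (if j = i then 1 else 0)"
      by (auto simp: cw_inner coeff_alpha)
  next
    fix w assume w: "\<forall>j\<in>{1..n}. \<alpha> j \<bullet> w = (if j = i then 1 else 0)"
    have "\<forall>j\<in>{1..n}. \<alpha> j \<bullet> (w - cw i) = 0"
      using w by (auto simp: inner_diff_right cw_inner coeff_alpha)
    then have "(w - cw i) \<bullet> (w - cw i) = 0" using span_Pi orth_span[of "w - cw i" "\<alpha> ` {1..n}" "w - cw i"] by auto
    then show "w = cw i" by simp
  qed
  then show ?thesis by (simp add: cw_inner)
qed

end



lemma Nats_sumR: "(\<And>x. x \<in> A \<Longrightarrow> f x \<in> \<nat>) \<Longrightarrow> sum f A \<in> (\<nat>::real set)"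
  by (induction A rule: infinite_finite_induct) auto

context RS begin

lemma pos_or_neg: "\<beta> \<in> \<Phi> \<Longrightarrow> \<beta> \<in> pos_roots \<Phi> \<alpha> n \<or> - \<beta> \<in> pos_roots \<Phi> \<alpha> n"
  using root_coeff(2)[of \<beta>] negPhi[of \<beta>] by (auto simp: pos_roots_def coeff_neg)

lemma pos_coeff_nat: "\<beta> \<in> pos_roots \<Phi> \<alpha> n \<Longrightarrow> coeff \<alpha> n \<beta> i \<in> \<nat>"
  using root_coeff(1)[of \<beta>] coeff_out[of i \<beta>]
  by (cases "i \<in> {1..n}") (auto simp: pos_roots_def Nats_altdef2)

definition ht :: "'a \<Rightarrow> real" where "ht x = (\<Sum>i=1..n. coeff \<alpha> n x i)"

lemma ht_add: "ht (x + y) = ht x + ht y" by (simp add: ht_def local.coeff_add sum.distrib)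
lemma ht_diff: "ht (x - y) = ht x - ht y" by (simp add: ht_def local.coeff_diff sum_subtractf)
lemma ht_sum: "ht (\<Sum>x\<in>A. f x) = (\<Sum>x\<in>A. ht (f x))"
  by (simp add: ht_def local.coeff_sum) (rule sum.swap)
lemma ht_scale: "ht (r *\<^sub>R x) = r * ht x" by (simp add: ht_def coeff_scale sum_distrib_left)

lemma ht_pos_root: assumes "\<beta> \<in> pos_roots \<Phi> \<alpha> n" shows "ht \<beta> \<in> \<nat>" "ht \<beta> \<ge> 1"
proof -
  have nat: "\<forall>i. coeff \<alpha> n \<beta> i \<in> \<nat>" using pos_coeff_nat assms by blast
  show "ht \<beta> \<in> \<nat>" unfolding ht_def using nat by (auto intro: Nats_sumR)
  have "\<beta> \<noteq> 0" using assms zPhi by (auto simp: pos_roots_def)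
  then obtain i where i: "i \<in> {1..n}" "coeff \<alpha> n \<beta> i \<noteq> 0"
    using eq_by_coeff[of \<beta> 0] by (auto simp: coeff_zero)
  moreover obtain k :: nat where "coeff \<alpha> n \<beta> i = of_nat k" using nat by (meson Nats_cases)
  ultimately have "coeff \<alpha> n \<beta> i \<ge> 1" by simp
  moreover have "coeff \<alpha> n \<beta> i \<le> ht \<beta>" unfolding ht_def
    using nat i by (intro member_le_sum) (auto simp: Nats_altdef2)
  ultimately show "ht \<beta> \<ge> 1" by linarith
qed

lemma pos_in: "\<beta> \<in> pos_roots \<Phi> \<alpha> n \<Longrightarrow> \<beta> \<in> \<Phi>" by (simp add: pos_roots_def)

lemma root_nz: "a \<in> \<Phi> \<Longrightarrow> a \<noteq> 0" using zPhi by auto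

lemma F2:
  assumes a: "a \<in> \<Phi>" and b: "b \<in> \<Phi>" and ab: "a \<bullet> b > 0" and ne: "a \<noteq> b"
  shows "a - b \<in> \<Phi>"
proof -
  have an: "a \<noteq> 0" and bn: "b \<noteq> 0" using a b root_nz by auto
  have aa: "a \<bullet> a > 0" "b \<bullet> b > 0" using an bn by auto
  define p where "p = 2 * (a \<bullet> b) / (b \<bullet> b)"
  define q where "q = 2 * (b \<bullet> a) / (a \<bullet> a)"
  have pZ: "p \<in> \<int>" using cartan[OF b a] by (simp add: p_def)
  have qZ: "q \<in> \<int>" using cartan[OF a b] by (simp add: q_def)
  have pp: "p > 0" "q > 0" using ab aa by (auto simp: p_def q_def inner_commute)
  have strict: "\<bar>a \<bullet> b\<bar> < norm a * norm b"
  proof (rule ccontr)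
    assume "\<not> ?thesis"
    then have "\<bar>a \<bullet> b\<bar> = norm a * norm b" using Cauchy_Schwarz_ineq2[of a b] by linarith
    then have "norm a *\<^sub>R b = norm b *\<^sub>R a \<or> norm a *\<^sub>R b = - norm b *\<^sub>R a"
      using norm_cauchy_schwarz_abs_eq by blast
    then obtain s where s: "norm a *\<^sub>R b = s *\<^sub>R a" by (metis scaleR_minus_left)
    have na: "norm a \<noteq> 0" using an by simp
    have "b = (1 / norm a) *\<^sub>R (norm a *\<^sub>R b)" using na by simp
    also have "\<dots> = (s / norm a) *\<^sub>R a" using s by simp
    finally have c: "b = (s / norm a) *\<^sub>R a" .
    obtain c where c: "b = c *\<^sub>R a" using c by blast
    then have "c = 1 \<or> c = -1" using reduced[OF a] b by simp
    then show False using c ne ab aa by auto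
  qed
  have "(a \<bullet> b)^2 < (norm a * norm b)^2"
    using strict ab by (intro power_strict_mono) auto
  also have "\<dots> = (a \<bullet> a) * (b \<bullet> b)" by (simp add: power_mult_distrib power2_norm_eq_inner)
  finally have lt: "(a \<bullet> b)^2 < (a \<bullet> a) * (b \<bullet> b)" .
  have "p * q = (4 * (a \<bullet> b)^2) / ((a \<bullet> a) * (b \<bullet> b))"
    unfolding p_def q_def by (simp add: inner_commute power2_eq_square mult.commute mult.left_commute)
  also have "\<dots> < 4"
  proof -
    have pos: "(a \<bullet> a) * (b \<bullet> b) > 0" using aa by simp
    have "4 * (a \<bullet> b)^2 < 4 * ((a \<bullet> a) * (b \<bullet> b))" using lt by simp
    then show ?thesis using pos by (simp add: divide_less_eq)
  qed
  finally have pq: "p * q < 4" .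
  obtain P :: int where P: "p = of_int P" using pZ Ints_cases by blast
  obtain Q :: int where Q: "q = of_int Q" using qZ Ints_cases by blast
  note PQ = P Q
  have "P \<ge> 1" "Q \<ge> 1" using pp PQ by auto
  moreover have "P * Q < 4" using pq PQ by (metis of_int_less_iff of_int_mult of_int_numeral)
  ultimately have "P = 1 \<or> Q = 1"
  proof -
    assume h: "P \<ge> 1" "Q \<ge> 1" "P * Q < 4"
    show ?thesis
    proof (rule ccontr)
      assume "\<not> ?thesis"
      then have "P \<ge> 2" "Q \<ge> 2" using h by auto
      then have "P * Q \<ge> 2 * 2" by (intro mult_mono) auto
      with h show False by simp
    qed
  qed
  then show ?thesis
  proof
    assume "P = 1" then have "p = 1" using PQ by simp
    then have "reflect b a = a - b" unfolding reflect_def p_def[symmetric] by simp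
    then show ?thesis using reflPhi[OF b a] by simp
  next
    assume "Q = 1" then have "q = 1" using PQ by simp
    then have "reflect a b = b - a" unfolding reflect_def q_def[symmetric] by simp
    then have "b - a \<in> \<Phi>" using reflPhi[OF a b] by simp
    then show ?thesis using negPhi by fastforce
  qed
qed

lemma F3:
  assumes a: "a \<in> \<Phi>" and b: "b \<in> \<Phi>" and ab: "a \<bullet> b < 0" and ne: "a \<noteq> - b"
  shows "a + b \<in> \<Phi>"
  using F2[OF a negPhi[OF b]] ab ne by simp

end



context RS begin

lemma inner_expand: "y \<bullet> v = (\<Sum>k=1..n. coeff \<alpha> n y k * (\<alpha> k \<bullet> v))"
  by (subst coeff_expand[of y]) (simp add: inner_sum_left)

lemma ht_alpha: "i \<in> {1..n} \<Longrightarrow> ht (\<alpha> i) = 1"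
  unfolding ht_def by (simp add: coeff_alpha)

lemma alpha_pos: "i \<in> {1..n} \<Longrightarrow> \<alpha> i \<in> pos_roots \<Phi> \<alpha> n"
  by (auto simp: pos_roots_def alpha_in coeff_alpha)

lemma pos_neg_not: "x \<in> pos_roots \<Phi> \<alpha> n \<Longrightarrow> - x \<in> pos_roots \<Phi> \<alpha> n \<Longrightarrow> False"
proof -
  assume a: "x \<in> pos_roots \<Phi> \<alpha> n" "- x \<in> pos_roots \<Phi> \<alpha> n"
  then have "\<And>i. i \<in> {1..n} \<Longrightarrow> coeff \<alpha> n x i = coeff \<alpha> n 0 i"
    by (force simp: pos_roots_def coeff_neg coeff_zero)
  then have "x = 0" by (rule eq_by_coeff)
  then show False using a zPhi by (auto simp: pos_roots_def)
qed

lemma simple_obtuse: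
  assumes i: "i \<in> {1..n}" and j: "j \<in> {1..n}" and ij: "i \<noteq> j"
  shows "\<alpha> i \<bullet> \<alpha> j \<le> 0"
proof (rule ccontr)
  assume "\<not> ?thesis"
  moreover have "\<alpha> i \<noteq> \<alpha> j" using inj\<alpha> i j ij by (meson inj_on_eq_iff)
  ultimately have r: "\<alpha> i - \<alpha> j \<in> \<Phi>" using F2[OF alpha_in[OF i] alpha_in[OF j]] by simp
  have "coeff \<alpha> n (\<alpha> i - \<alpha> j) i = 1" "coeff \<alpha> n (\<alpha> i - \<alpha> j) j = -1"
    using i j ij by (auto simp: local.coeff_diff coeff_alpha)
  then show False using root_coeff(2)[OF r] i j by force
qed

lemma pos_nonneg: "x \<in> pos_roots \<Phi> \<alpha> n \<Longrightarrow> coeff \<alpha> n x i \<ge> 0"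
  using pos_coeff_nat[of x i] by (auto simp: Nats_altdef2)

lemma pos_by_coeff:
  assumes "x \<in> \<Phi>" "k \<in> {1..n}" "coeff \<alpha> n x k > 0"
  shows "x \<in> pos_roots \<Phi> \<alpha> n"
  using root_coeff(2)[OF assms(1)] assms by (force simp: pos_roots_def)

lemma pos_sub_simple:
  assumes x: "x \<in> pos_roots \<Phi> \<alpha> n" and h: "ht x \<ge> 2"
  shows "\<exists>i\<in>{1..n}. coeff \<alpha> n x i > 0 \<and> x \<bullet> \<alpha> i > 0 \<and> x - \<alpha> i \<in> pos_roots \<Phi> \<alpha> n"
proof -
  have xP: "x \<in> \<Phi>" using x pos_in by blast
  have "x \<noteq> 0" using xP zPhi by auto
  then have "x \<bullet> x > 0" by simp
  then have "(\<Sum>k=1..n. coeff \<alpha> n x k * (\<alpha> k \<bullet> x)) > 0" using inner_expand[of x x] by simp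
  then obtain i where i: "i \<in> {1..n}" "coeff \<alpha> n x i * (\<alpha> i \<bullet> x) > 0"
    by (meson not_le sum_nonpos)
  have ci: "coeff \<alpha> n x i > 0" and xi: "x \<bullet> \<alpha> i > 0"
    using i(2) pos_nonneg[OF x, of i] by (auto simp: inner_commute zero_less_mult_iff)
  have ne: "x \<noteq> \<alpha> i" using h ht_alpha[OF i(1)] by auto
  have r: "x - \<alpha> i \<in> \<Phi>" using F2[OF xP alpha_in[OF i(1)] xi ne] .
  obtain k where k: "k \<in> {1..n}" "k \<noteq> i" "coeff \<alpha> n x k > 0"
  proof (rule ccontr)
    assume "\<not> thesis"
    then have z: "\<forall>k\<in>{1..n}. k \<noteq> i \<longrightarrow> coeff \<alpha> n x k = 0"
    proof (intro ballI impI)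
      fix k assume "k \<in> {1..n}" "k \<noteq> i"
      then have "\<not> coeff \<alpha> n x k > 0" using that \<open>\<not> thesis\<close> by blast
      then show "coeff \<alpha> n x k = 0" using pos_nonneg[OF x, of k] by simp
    qed
    have "x = coeff \<alpha> n x i *\<^sub>R \<alpha> i"
      by (rule eq_by_coeff) (use z in \<open>auto simp: coeff_scale coeff_alpha[OF i(1)]\<close>)
    then have "coeff \<alpha> n x i = 1 \<or> coeff \<alpha> n x i = -1"
      using reduced[OF alpha_in[OF i(1)]] xP by metis
    moreover have "ht x = coeff \<alpha> n x i"
      using \<open>x = _\<close> ht_scale[of "coeff \<alpha> n x i" "\<alpha> i"] ht_alpha[OF i(1)] by simp
    ultimately show False using h by auto
  qed
  have "coeff \<alpha> n (x - \<alpha> i) k > 0" using k by (simp add: local.coeff_diff coeff_alpha[OF i(1)])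
  then have "x - \<alpha> i \<in> pos_roots \<Phi> \<alpha> n" using pos_by_coeff[OF r k(1)] by simp
  then show ?thesis using i ci xi by blast
qed

end



context RS begin

lemma decomp_aux:
  assumes orth: "\<forall>i\<in>J1. \<forall>j\<in>J2. \<alpha> i \<bullet> \<alpha> j = 0" and J: "J1 \<union> J2 = {1..n}"
    and y: "y \<in> pos_roots \<Phi> \<alpha> n" and yz: "\<forall>k\<in>J2. coeff \<alpha> n y k = 0"
    and i: "i \<in> J2" and r: "y + \<alpha> i \<in> \<Phi>"
  shows False
proof -
  have i1: "i \<in> {1..n}" using i J by auto
  have "y \<bullet> \<alpha> i = (\<Sum>k=1..n. coeff \<alpha> n y k * (\<alpha> k \<bullet> \<alpha> i))" by (rule inner_expand)
  also have "\<dots> = 0"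
  proof (rule sum.neutral, rule ballI)
    fix k assume k: "k \<in> {1..n}"
    show "coeff \<alpha> n y k * (\<alpha> k \<bullet> \<alpha> i) = 0"
    proof (cases "k \<in> J2")
      case True then show ?thesis using yz by simp
    next
      case False then have "k \<in> J1" using k J by auto
      then show ?thesis using orth i by simp
    qed
  qed
  finally have yi: "y \<bullet> \<alpha> i = 0" .
  have an: "\<alpha> i \<noteq> 0" using alpha_nz[OF i1] .
  have "(y + \<alpha> i) \<bullet> \<alpha> i = \<alpha> i \<bullet> \<alpha> i" using yi by (simp add: inner_add_left)
  then have "2 * ((y + \<alpha> i) \<bullet> \<alpha> i) / (\<alpha> i \<bullet> \<alpha> i) = 2" using an by simp
  then have "reflect (\<alpha> i) (y + \<alpha> i) = y - \<alpha> i"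
    unfolding reflect_def by (simp add: scaleR_2 algebra_simps)
  then have r2: "y - \<alpha> i \<in> \<Phi>" using reflPhi[OF alpha_in[OF i1] r] by simp
  have "y \<noteq> 0" using y zPhi by (auto simp: pos_roots_def)
  then obtain l where l: "l \<in> {1..n}" "coeff \<alpha> n y l \<noteq> 0"
    using eq_by_coeff[of y 0] by (auto simp: coeff_zero)
  then have lp: "coeff \<alpha> n y l > 0" using pos_nonneg[OF y, of l] by simp
  have "l \<noteq> i" using l yz i by auto
  then have "coeff \<alpha> n (y - \<alpha> i) l > 0" "coeff \<alpha> n (y - \<alpha> i) i = -1"
    using lp yz i by (simp_all add: local.coeff_diff coeff_alpha[OF i1])
  then show False using root_coeff(2)[OF r2] l(1) i1 by force
qed

lemma nat_ht_less:
  assumes "x \<in> pos_roots \<Phi> \<alpha> n" "y \<in> pos_roots \<Phi> \<alpha> n" "ht y < ht x"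
  shows "nat \<lfloor>ht y\<rfloor> < nat \<lfloor>ht x\<rfloor>"
proof -
  obtain a b :: nat where "ht x = of_nat a" "ht y = of_nat b"
    using ht_pos_root(1)[OF assms(1)] ht_pos_root(1)[OF assms(2)] by (meson Nats_cases)
  then show ?thesis using assms(3) by simp
qed

lemma decomp:
  assumes J: "J1 \<union> J2 = {1..n}" "J1 \<inter> J2 = {}" and orth: "\<forall>i\<in>J1. \<forall>j\<in>J2. \<alpha> i \<bullet> \<alpha> j = 0"
  shows "x \<in> pos_roots \<Phi> \<alpha> n \<Longrightarrow> (\<forall>k\<in>J2. coeff \<alpha> n x k = 0) \<or> (\<forall>k\<in>J1. coeff \<alpha> n x k = 0)"
proof (induction "nat \<lfloor>ht x\<rfloor>" arbitrary: x rule: less_induct)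
  case less
  have orth': "\<forall>i\<in>J2. \<forall>j\<in>J1. \<alpha> i \<bullet> \<alpha> j = 0" 
  proof (intro ballI)
    fix i j assume "i \<in> J2" "j \<in> J1"
    then show "\<alpha> i \<bullet> \<alpha> j = 0" using orth by (metis inner_commute)
  qed
  have J': "J2 \<union> J1 = {1..n}" using J by auto
  show ?case
  proof (cases "ht x \<ge> 2")
    case False
    show ?thesis
    proof (rule ccontr)
      assume "\<not> ?thesis"
      then obtain k l where kl: "k \<in> J2" "coeff \<alpha> n x k \<noteq> 0" "l \<in> J1" "coeff \<alpha> n x l \<noteq> 0" by auto
      have kl2: "k \<noteq> l" using kl J(2) by auto
      have ge1: "coeff \<alpha> n x k \<ge> 1" "coeff \<alpha> n x l \<ge> 1"
      proof -
        obtain a b :: nat where "coeff \<alpha> n x k = of_nat a" "coeff \<alpha> n x l = of_nat b"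
          using pos_coeff_nat[OF less.prems] by (meson Nats_cases)
        then show "coeff \<alpha> n x k \<ge> 1" "coeff \<alpha> n x l \<ge> 1" using kl by auto
      qed
      have "(\<Sum>j\<in>{k,l}. coeff \<alpha> n x j) \<le> ht x" unfolding ht_def
        using kl J pos_nonneg[OF less.prems] by (intro sum_mono2) auto
      then show False using kl2 ge1 False by simp
    qed
  next
    case True
    obtain i where i: "i \<in> {1..n}" "coeff \<alpha> n x i > 0" "x - \<alpha> i \<in> pos_roots \<Phi> \<alpha> n"
      using pos_sub_simple[OF less.prems True] by blast
    define y where "y = x - \<alpha> i"
    have y: "y \<in> pos_roots \<Phi> \<alpha> n" using i y_def by simp
    have "ht y = ht x - 1" using ht_alpha[OF i(1)] by (simp add: y_def ht_diff)
    then have "nat \<lfloor>ht y\<rfloor> < nat \<lfloor>ht x\<rfloor>" using nat_ht_less[OF less.prems y] by simp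
    then have IH: "(\<forall>k\<in>J2. coeff \<alpha> n y k = 0) \<or> (\<forall>k\<in>J1. coeff \<alpha> n y k = 0)"
      using less.hyps y by blast
    have xy: "x = y + \<alpha> i" by (simp add: y_def)
    have xP: "y + \<alpha> i \<in> \<Phi>" using less.prems xy by (simp add: pos_roots_def)
    have cx: "\<And>k. coeff \<alpha> n x k = coeff \<alpha> n y k + (if k = i then 1 else 0)"
      using xy by (simp add: local.coeff_add coeff_alpha[OF i(1)])
    from IH show ?thesis
    proof
      assume yz: "\<forall>k\<in>J2. coeff \<alpha> n y k = 0"
      show ?thesis
      proof (cases "i \<in> J2")
        case True then show ?thesis using decomp_aux[OF orth J(1) y yz True xP] by blast
      next
        case False then show ?thesis using yz cx by auto
      qed
    next
      assume yz: "\<forall>k\<in>J1. coeff \<alpha> n y k = 0"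
      show ?thesis
      proof (cases "i \<in> J1")
        case True then show ?thesis using decomp_aux[OF orth' J' y yz True xP] by blast
      next
        case False then show ?thesis using yz cx by auto
      qed
    qed
  qed
qed

end



context RS begin

definition pmax :: "'a \<Rightarrow> bool" where
  "pmax \<theta> \<longleftrightarrow> \<theta> \<in> pos_roots \<Phi> \<alpha> n \<and> (\<forall>y\<in>pos_roots \<Phi> \<alpha> n. root_le \<alpha> n \<theta> y \<longrightarrow> y = \<theta>)"

lemma root_le_refl: "root_le \<alpha> n x x" by (simp add: root_le_def)

lemma root_le_trans: "root_le \<alpha> n x y \<Longrightarrow> root_le \<alpha> n y z \<Longrightarrow> root_le \<alpha> n x z"
  unfolding root_le_def
proof (intro ballI)
  fix i assume a: "\<forall>i\<in>{1..n}. coeff \<alpha> n y i - coeff \<alpha> n x i \<in> \<nat>"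
    "\<forall>i\<in>{1..n}. coeff \<alpha> n z i - coeff \<alpha> n y i \<in> \<nat>" and i: "i \<in> {1..n}"
  have "coeff \<alpha> n z i - coeff \<alpha> n x i = (coeff \<alpha> n z i - coeff \<alpha> n y i) + (coeff \<alpha> n y i - coeff \<alpha> n x i)"
    by simp
  then show "coeff \<alpha> n z i - coeff \<alpha> n x i \<in> \<nat>" using a i by (metis Nats_add)
qed

lemma root_le_ht: "root_le \<alpha> n x y \<Longrightarrow> ht x \<le> ht y"
  unfolding root_le_def ht_def
  by (intro sum_mono) (auto simp: Nats_altdef2)

lemma root_le_ht_eq: "root_le \<alpha> n x y \<Longrightarrow> ht y \<le> ht x \<Longrightarrow> y = x"
proof -
  assume a: "root_le \<alpha> n x y" "ht y \<le> ht x"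
  have nn: "\<forall>i\<in>{1..n}. coeff \<alpha> n y i - coeff \<alpha> n x i \<ge> 0"
    using a(1) unfolding root_le_def by (auto simp: Nats_altdef2)
  have "(\<Sum>i=1..n. coeff \<alpha> n y i - coeff \<alpha> n x i) = ht y - ht x"
    by (simp add: ht_def sum_subtractf)
  then have "(\<Sum>i=1..n. coeff \<alpha> n y i - coeff \<alpha> n x i) = 0"
    using a root_le_ht[OF a(1)] by simp
  then have "\<forall>i\<in>{1..n}. coeff \<alpha> n y i - coeff \<alpha> n x i = 0"
    using nn by (subst (asm) sum_nonneg_eq_0_iff) auto
  then show "y = x" by (intro eq_by_coeff) auto
qed

lemma pmax_above:
  assumes x: "x \<in> pos_roots \<Phi> \<alpha> n" shows "\<exists>\<theta>. pmax \<theta> \<and> root_le \<alpha> n x \<theta>"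
proof -
  define S where "S = {y\<in>pos_roots \<Phi> \<alpha> n. root_le \<alpha> n x y}"
  have fin: "finite S" using finPhi by (rule finite_subset[rotated]) (auto simp: S_def pos_roots_def)
  have xS: "x \<in> S" using x root_le_refl by (simp add: S_def)
  define M where "M = Max (ht ` S)"
  have "M \<in> ht ` S" unfolding M_def using fin xS by (intro Max_in) auto
  then obtain y where y: "y \<in> S" "ht y = M" by auto
  have ymax: "\<forall>z\<in>S. ht z \<le> ht y" using fin y(2) unfolding M_def by auto
  have "pmax y" unfolding pmax_def
  proof (intro conjI ballI impI)
    show "y \<in> pos_roots \<Phi> \<alpha> n" using y by (simp add: S_def)
    fix z assume z: "z \<in> pos_roots \<Phi> \<alpha> n" "root_le \<alpha> n y z"
    then have "z \<in> S" using y(1) root_le_trans by (auto simp: S_def)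
    then show "z = y" using ymax z(2) root_le_ht_eq by blast
  qed
  then show ?thesis using y(1) by (auto simp: S_def)
qed

lemma pmax_dot:
  assumes t: "pmax \<theta>" and i: "i \<in> {1..n}" shows "\<theta> \<bullet> \<alpha> i \<ge> 0"
proof (rule ccontr)
  assume "\<not> ?thesis"
  then have lt: "\<theta> \<bullet> \<alpha> i < 0" by simp
  have tp: "\<theta> \<in> pos_roots \<Phi> \<alpha> n" using t by (simp add: pmax_def)
  have "\<theta> \<noteq> - \<alpha> i" using pos_neg_not[OF alpha_pos[OF i]] tp by auto
  then have r: "\<theta> + \<alpha> i \<in> \<Phi>" using F3[OF pos_in[OF tp] alpha_in[OF i] lt] by simp
  have "coeff \<alpha> n (\<theta> + \<alpha> i) i > 0"
    using pos_nonneg[OF tp, of i] by (simp add: local.coeff_add coeff_alpha[OF i])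
  then have p: "\<theta> + \<alpha> i \<in> pos_roots \<Phi> \<alpha> n" using pos_by_coeff[OF r i] by simp
  have "root_le \<alpha> n \<theta> (\<theta> + \<alpha> i)" unfolding root_le_def
    by (auto simp: local.coeff_add coeff_alpha[OF i])
  then have "\<theta> + \<alpha> i = \<theta>" using t p by (auto simp: pmax_def)
  then show False using alpha_nz[OF i] by simp
qed

lemma pmax_full:
  assumes irr: "irreducible_root_system \<Phi>" and t: "pmax \<theta>" and i: "i \<in> {1..n}"
  shows "coeff \<alpha> n \<theta> i > 0"
proof (rule ccontr)
  assume "\<not> ?thesis"
  have tp: "\<theta> \<in> pos_roots \<Phi> \<alpha> n" using t by (simp add: pmax_def)
  define J1 where "J1 = {k\<in>{1..n}. coeff \<alpha> n \<theta> k > 0}"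
  define J2 where "J2 = {k\<in>{1..n}. coeff \<alpha> n \<theta> k = 0}"
  have iJ2: "i \<in> J2" using \<open>\<not> _\<close> pos_nonneg[OF tp, of i] i by (simp add: J2_def)
  have J: "J1 \<union> J2 = {1..n}" "J1 \<inter> J2 = {}"
    using pos_nonneg[OF tp] by (auto simp: J1_def J2_def less_eq_real_def)
  have orth: "\<forall>k\<in>J1. \<forall>j\<in>J2. \<alpha> k \<bullet> \<alpha> j = 0"
  proof (intro ballI)
    fix k j assume k: "k \<in> J1" and j: "j \<in> J2"
    have j1: "j \<in> {1..n}" using j by (simp add: J2_def)
    have terms: "\<forall>l\<in>{1..n}. coeff \<alpha> n \<theta> l * (\<alpha> l \<bullet> \<alpha> j) \<le> 0"
    proof
      fix l assume l: "l \<in> {1..n}"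
      show "coeff \<alpha> n \<theta> l * (\<alpha> l \<bullet> \<alpha> j) \<le> 0"
      proof (cases "coeff \<alpha> n \<theta> l = 0")
        case True then show ?thesis by simp
      next
        case False
        then have "l \<noteq> j" using j by (auto simp: J2_def)
        then have "\<alpha> l \<bullet> \<alpha> j \<le> 0" using simple_obtuse[OF l j1] by simp
        then show ?thesis using pos_nonneg[OF tp, of l] by (simp add: mult_nonneg_nonpos)
      qed
    qed
    have "0 \<le> \<theta> \<bullet> \<alpha> j" using pmax_dot[OF t j1] .
    also have "\<theta> \<bullet> \<alpha> j = (\<Sum>l=1..n. coeff \<alpha> n \<theta> l * (\<alpha> l \<bullet> \<alpha> j))" by (rule inner_expand)
    finally have "(\<Sum>l=1..n. - (coeff \<alpha> n \<theta> l * (\<alpha> l \<bullet> \<alpha> j))) \<le> 0"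
      by (simp add: sum_negf)
    moreover have "\<forall>l\<in>{1..n}. - (coeff \<alpha> n \<theta> l * (\<alpha> l \<bullet> \<alpha> j)) \<ge> 0" using terms by auto
    ultimately have "(\<Sum>l=1..n. - (coeff \<alpha> n \<theta> l * (\<alpha> l \<bullet> \<alpha> j))) = 0"
      by (meson antisym sum_nonneg)
    then have "\<forall>l\<in>{1..n}. - (coeff \<alpha> n \<theta> l * (\<alpha> l \<bullet> \<alpha> j)) = 0"
      using terms by (subst (asm) sum_nonneg_eq_0_iff) auto
    moreover have k1: "k \<in> {1..n}" "coeff \<alpha> n \<theta> k > 0" using k by (auto simp: J1_def)
    ultimately have "- (coeff \<alpha> n \<theta> k * (\<alpha> k \<bullet> \<alpha> j)) = 0" by blast
    then show "\<alpha> k \<bullet> \<alpha> j = 0" using k1(2) by simp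
  qed
  have "\<theta> \<noteq> 0" using tp zPhi by (auto simp: pos_roots_def)
  then obtain l where l: "l \<in> {1..n}" "coeff \<alpha> n \<theta> l \<noteq> 0"
    using eq_by_coeff[of \<theta> 0] by (auto simp: coeff_zero)
  then have lJ1: "l \<in> J1" using pos_nonneg[OF tp, of l] by (auto simp: J1_def)
  define A where "A = {x\<in>\<Phi>. \<forall>k\<in>J2. coeff \<alpha> n x k = 0}"
  define B where "B = {x\<in>\<Phi>. \<forall>k\<in>J1. coeff \<alpha> n x k = 0}"
  have "A \<noteq> {}"
  proof -
    have "\<alpha> l \<in> A" using lJ1 J(2) l(1) by (auto simp: A_def alpha_in coeff_alpha[OF l(1)])
    then show ?thesis by auto
  qed
  moreover have "B \<noteq> {}"
  proof -
    have "\<alpha> i \<in> B" using iJ2 J(2) i by (auto simp: B_def alpha_in coeff_alpha[OF i])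
    then show ?thesis by auto
  qed
  moreover have "A \<union> B = \<Phi>"
  proof
    show "A \<union> B \<subseteq> \<Phi>" by (auto simp: A_def B_def)
    show "\<Phi> \<subseteq> A \<union> B"
    proof
      fix x assume x: "x \<in> \<Phi>"
      from pos_or_neg[OF x] show "x \<in> A \<union> B"
      proof
        assume "x \<in> pos_roots \<Phi> \<alpha> n"
        from decomp[OF J orth this] show ?thesis using x by (auto simp: A_def B_def)
      next
        assume "- x \<in> pos_roots \<Phi> \<alpha> n"
        from decomp[OF J orth this] show ?thesis using x by (auto simp: A_def B_def coeff_neg)
      qed
    qed
  qed
  moreover have "A \<inter> B = {}"
  proof (rule ccontr)
    assume "A \<inter> B \<noteq> {}"
    then obtain x where x: "x \<in> A" "x \<in> B" by auto
    have "x = 0"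
    proof (rule eq_by_coeff)
      fix k assume "k \<in> {1..n}"
      then show "coeff \<alpha> n x k = coeff \<alpha> n 0 k" using x J(1) by (auto simp: A_def B_def coeff_zero)
    qed
    then show False using x zPhi by (auto simp: A_def)
  qed
  moreover have "\<forall>a\<in>A. \<forall>b\<in>B. a \<bullet> b = 0"
  proof (intro ballI)
    fix a b assume a: "a \<in> A" and b: "b \<in> B"
    have "a \<bullet> b = (\<Sum>k=1..n. coeff \<alpha> n a k * (\<alpha> k \<bullet> b))" by (rule inner_expand)
    also have "\<dots> = 0"
    proof (rule sum.neutral, rule ballI)
      fix k assume k: "k \<in> {1..n}"
      show "coeff \<alpha> n a k * (\<alpha> k \<bullet> b) = 0"
      proof (cases "k \<in> J2")
        case True then show ?thesis using a by (simp add: A_def)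
      next
        case False then have kJ1: "k \<in> J1" using k J(1) by auto
        have "\<alpha> k \<bullet> b = b \<bullet> \<alpha> k" by (simp add: inner_commute)
        also have "\<dots> = (\<Sum>l=1..n. coeff \<alpha> n b l * (\<alpha> l \<bullet> \<alpha> k))" by (rule inner_expand)
        also have "\<dots> = 0"
        proof (rule sum.neutral, rule ballI)
          fix l assume l: "l \<in> {1..n}"
          show "coeff \<alpha> n b l * (\<alpha> l \<bullet> \<alpha> k) = 0"
          proof (cases "l \<in> J1")
            case True then show ?thesis using b by (simp add: B_def)
          next
            case False then have "l \<in> J2" using l J(1) by auto
            then have "\<alpha> k \<bullet> \<alpha> l = 0" using orth kJ1 by blast
            then show ?thesis by (simp add: inner_commute)
          qed
        qed
        finally show ?thesis by simp
      qed
    qed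
    finally show "a \<bullet> b = 0" .
  qed
  ultimately show False using irr unfolding irreducible_root_system_def by blast
qed

lemma pmax_unique:
  assumes irr: "irreducible_root_system \<Phi>" and t: "pmax \<theta>" and t': "pmax \<theta>'"
  shows "\<theta> = \<theta>'"
proof (rule ccontr)
  assume ne: "\<theta> \<noteq> \<theta>'"
  have tp: "\<theta> \<in> pos_roots \<Phi> \<alpha> n" using t by (simp add: pmax_def)
  have tp': "\<theta>' \<in> pos_roots \<Phi> \<alpha> n" using t' by (simp add: pmax_def)
  obtain k where k: "k \<in> {1..n}" "\<theta> \<bullet> \<alpha> k > 0"
  proof (rule ccontr)
    assume "\<not> thesis"
    have z: "\<forall>k\<in>{1..n}. \<theta> \<bullet> \<alpha> k = 0"
    proof
      fix k assume k: "k \<in> {1..n}"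
      then have "\<not> \<theta> \<bullet> \<alpha> k > 0" using that \<open>\<not> thesis\<close> by blast
      then show "\<theta> \<bullet> \<alpha> k = 0" using pmax_dot[OF t k] by simp
    qed
    have "\<theta> \<bullet> \<theta> = (\<Sum>l=1..n. coeff \<alpha> n \<theta> l * (\<alpha> l \<bullet> \<theta>))" by (rule inner_expand)
    also have "\<dots> = 0" using z by (simp add: inner_commute)
    finally have "\<theta> = 0" by simp
    then show False using tp zPhi by (auto simp: pos_roots_def)
  qed
  have "\<theta>' \<bullet> \<theta> = (\<Sum>l=1..n. coeff \<alpha> n \<theta>' l * (\<alpha> l \<bullet> \<theta>))" by (rule inner_expand)
  also have "\<dots> > 0"
  proof (rule sum_pos2[OF _ k(1)])
    show "0 < coeff \<alpha> n \<theta>' k * (\<alpha> k \<bullet> \<theta>)"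
      using pmax_full[OF irr t' k(1)] k(2) by (simp add: inner_commute)
    show "\<And>l. l \<in> {1..n} \<Longrightarrow> 0 \<le> coeff \<alpha> n \<theta>' l * (\<alpha> l \<bullet> \<theta>)"
      using pos_nonneg[OF tp'] pmax_dot[OF t] by (simp add: inner_commute)
  qed simp
  finally have "\<theta> \<bullet> \<theta>' > 0" by (simp add: inner_commute)
  then have d: "\<theta> - \<theta>' \<in> \<Phi>" using F2[OF pos_in[OF tp] pos_in[OF tp'] _ ne] by simp
  from pos_or_neg[OF d] show False
  proof
    assume "\<theta> - \<theta>' \<in> pos_roots \<Phi> \<alpha> n"
    then have "root_le \<alpha> n \<theta>' \<theta>" unfolding root_le_def
      using pos_coeff_nat by (metis local.coeff_diff)
    then show False using t' tp ne by (auto simp: pmax_def)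
  next
    assume "- (\<theta> - \<theta>') \<in> pos_roots \<Phi> \<alpha> n"
    then have "\<theta>' - \<theta> \<in> pos_roots \<Phi> \<alpha> n" by simp
    then have "root_le \<alpha> n \<theta> \<theta>'" unfolding root_le_def
      using pos_coeff_nat by (metis local.coeff_diff)
    then show False using t tp' ne by (auto simp: pmax_def)
  qed
qed

lemma highest:
  assumes irr: "irreducible_root_system \<Phi>"
  shows "highest_root \<Phi> \<alpha> n \<in> pos_roots \<Phi> \<alpha> n"
    "\<And>\<beta>. \<beta> \<in> pos_roots \<Phi> \<alpha> n \<Longrightarrow> root_le \<alpha> n \<beta> (highest_root \<Phi> \<alpha> n)"
proof -
  have "1 \<in> {1..n}" using n_dim DIM_positive[where 'a='a] by simp
  obtain \<theta> where t: "pmax \<theta>" using pmax_above[OF alpha_pos[OF \<open>1 \<in> {1..n}\<close>]] by blast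
  have all: "\<forall>\<beta>\<in>pos_roots \<Phi> \<alpha> n. root_le \<alpha> n \<beta> \<theta>"
  proof
    fix \<beta> assume "\<beta> \<in> pos_roots \<Phi> \<alpha> n"
    then obtain \<theta>' where "pmax \<theta>'" "root_le \<alpha> n \<beta> \<theta>'" using pmax_above by blast
    then show "root_le \<alpha> n \<beta> \<theta>" using pmax_unique[OF irr t] by blast
  qed
  have tp: "\<theta> \<in> pos_roots \<Phi> \<alpha> n" using t by (simp add: pmax_def)
  have "highest_root \<Phi> \<alpha> n = \<theta>" unfolding highest_root_def
  proof (rule the_equality)
    show "\<theta> \<in> pos_roots \<Phi> \<alpha> n \<and> (\<forall>\<beta>\<in>pos_roots \<Phi> \<alpha> n. root_le \<alpha> n \<beta> \<theta>)" using tp all by blast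
  next
    fix \<theta>'' assume h: "\<theta>'' \<in> pos_roots \<Phi> \<alpha> n \<and> (\<forall>\<beta>\<in>pos_roots \<Phi> \<alpha> n. root_le \<alpha> n \<beta> \<theta>'')"
    then have "root_le \<alpha> n \<theta> \<theta>''" using tp by blast
    moreover have "root_le \<alpha> n \<theta>'' \<theta>" using all h by blast
    ultimately show "\<theta>'' = \<theta>" using root_le_ht root_le_ht_eq by (meson antisym)
  qed
  then show "highest_root \<Phi> \<alpha> n \<in> pos_roots \<Phi> \<alpha> n"
    "\<And>\<beta>. \<beta> \<in> pos_roots \<Phi> \<alpha> n \<Longrightarrow> root_le \<alpha> n \<beta> (highest_root \<Phi> \<alpha> n)" using tp all by auto
qed

lemma hmult_bound:
  assumes irr: "irreducible_root_system \<Phi>" and x: "x \<in> pos_roots \<Phi> \<alpha> n" and i: "i \<in> {1..n}"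
  shows "coeff \<alpha> n x i \<le> hmult \<Phi> \<alpha> n i"
  using highest(2)[OF irr x] i unfolding root_le_def hmult_def by (auto simp: Nats_altdef2)

end



locale RSI = RS +
  fixes I :: "nat set" and d :: real
  assumes I_sub: "I \<subseteq> {1..n}"
    and affd: "aff_dim (convex hull (face_vertices \<Phi> \<alpha> n I)) = int n - int (card I)"
    and dpos: "d > 0" and Sd: "S_set \<Phi> \<alpha> n I d \<noteq> {}"
    and dmax: "\<forall>b>0. S_set \<Phi> \<alpha> n I b \<noteq> {} \<longrightarrow> b \<le> d"
begin

abbreviation "V \<equiv> face_vertices \<Phi> \<alpha> n I"
abbreviation "m \<equiv> hmult \<Phi> \<alpha> n"
abbreviation "J \<equiv> {1..n} - I"
abbreviation "PJ \<equiv> \<alpha> ` ({1..n} - I)"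
abbreviation "Vs \<equiv> span V"

lemma V_char: "x \<in> V \<longleftrightarrow> x \<in> pos_roots \<Phi> \<alpha> n \<and> (\<forall>i\<in>I. coeff \<alpha> n x i = m i)"
proof -
  have "\<forall>i\<in>I. x \<bullet> coweight \<alpha> n i = coeff \<alpha> n x i" using I_sub coweight_inner by blast
  then show ?thesis unfolding face_vertices_def by auto
qed

lemma V_sub: "V \<subseteq> \<Phi>" using V_char pos_in by blast

lemma card_I: "card I \<le> n"
  using card_mono[OF _ I_sub] by simp

lemma V_ne: "V \<noteq> {}"
proof
  assume "V = {}"
  then have "aff_dim (convex hull V) = -1" by simp
  then show False using affd card_I by simp
qed

definition g0 where "g0 = (SOME x. x \<in> V)"
lemma g0V: "g0 \<in> V" unfolding g0_def using V_ne by (simp add: some_in_eq)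
lemma g0_coeff: "i \<in> I \<Longrightarrow> coeff \<alpha> n g0 i = m i" using g0V V_char by blast
lemma m_nat: "i \<in> I \<Longrightarrow> m i \<in> \<nat>"
  using g0_coeff pos_coeff_nat g0V V_char by metis

lemma S_char: "x \<in> S_set \<Phi> \<alpha> n I b \<longleftrightarrow> x \<in> \<Phi> \<and> (\<forall>i\<in>I. coeff \<alpha> n x i = m i / b)"
  by (simp add: S_set_def)

lemma ex_i0: "\<exists>i0\<in>I. m i0 > 0"
proof (rule ccontr)
  assume "\<not> ?thesis"
  then have z: "\<forall>i\<in>I. m i = 0" using m_nat by (force simp: Nats_altdef2)
  then have "S_set \<Phi> \<alpha> n I (d + 1) = S_set \<Phi> \<alpha> n I d" by (simp add: S_set_def)
  then have "S_set \<Phi> \<alpha> n I (d + 1) \<noteq> {}" using Sd by simp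
  moreover have "d + 1 > 0" using dpos by simp
  ultimately have "d + 1 \<le> d" using dmax by blast
  then show False by simp
qed

definition i0 where "i0 = (SOME i. i \<in> I \<and> m i > 0)"
lemma i0: "i0 \<in> I" "m i0 > 0" using ex_i0 unfolding i0_def by (metis (mono_tags, lifting) someI_ex)+
lemma i0n: "i0 \<in> {1..n}" using i0 I_sub by auto

definition t :: "'a \<Rightarrow> real" where "t x = coeff \<alpha> n x i0 / m i0"

lemma t_add: "t (x + y) = t x + t y" by (simp add: t_def local.coeff_add add_divide_distrib)
lemma t_diff: "t (x - y) = t x - t y" by (simp add: t_def local.coeff_diff diff_divide_distrib)
lemma t_scale: "t (c *\<^sub>R x) = c * t x" by (simp add: t_def coeff_scale)
lemma t_neg: "t (- x) = - t x" by (simp add: t_def coeff_neg)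
lemma t_V: "x \<in> V \<Longrightarrow> t x = 1" using V_char i0 by (simp add: t_def)
lemma t_alphaJ: "j \<in> J \<Longrightarrow> t (\<alpha> j) = 0"
  using i0 by (auto simp: t_def coeff_alpha)

lemma Vs_coeff: "x \<in> Vs \<Longrightarrow> \<forall>i\<in>I. coeff \<alpha> n x i = t x * m i"
proof (induction rule: span_induct_alt)
  case base then show ?case by (simp add: coeff_zero t_def)
next
  case (step c x y)
  then show ?case using V_char[of x] t_V[of x]
    by (simp add: local.coeff_add coeff_scale t_add t_scale algebra_simps)
qed

lemma zeroI_in_PJ:
  assumes "\<forall>i\<in>I. coeff \<alpha> n x i = 0" shows "x \<in> span PJ"
proof -
  have "x = (\<Sum>j=1..n. coeff \<alpha> n x j *\<^sub>R \<alpha> j)" by (rule coeff_expand)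
  also have "\<dots> = (\<Sum>j\<in>J. coeff \<alpha> n x j *\<^sub>R \<alpha> j)"
    using assms by (intro sum.mono_neutral_right) auto
  also have "\<dots> \<in> span PJ" by (intro span_sum span_scale span_base) auto
  finally show ?thesis .
qed

lemma indepPJ: "independent PJ" using indepPi by (rule independent_mono) auto
lemma cardPJ: "card PJ = card J"
  by (rule card_image) (rule inj_on_subset[OF inj\<alpha>], auto)
lemma cardJ: "card J = n - card I" using I_sub by (simp add: card_Diff_subset finite_subset)

lemma PJ_Vs: "PJ \<subseteq> Vs"
proof -
  define D0 where "D0 = (\<lambda>x. x - g0) ` V"
  have "g0 \<in> affine hull V" using g0V by (simp add: hull_inc)
  then have "aff_dim V = int (dim D0)" unfolding D0_def by (rule aff_dim_eq_dim_subtract)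
  then have dD0: "dim D0 = card J" using affd card_I cardJ by (simp add: aff_dim_convex_hull)
  have D0s: "D0 \<subseteq> span PJ"
  proof
    fix y assume "y \<in> D0"
    then obtain v where v: "v \<in> V" "y = v - g0" by (auto simp: D0_def)
    then have "\<forall>i\<in>I. coeff \<alpha> n y i = 0" using V_char g0_coeff by (simp add: local.coeff_diff)
    then show "y \<in> span PJ" by (rule zeroI_in_PJ)
  qed
  have "dim (span PJ) = card J" using dim_span_eq_card_independent[OF indepPJ] cardPJ by simp
  then have "span D0 = span (span PJ)" using dD0 D0s by (intro dim_eq_span) auto
  then have eq: "span D0 = span PJ" by simp
  have "D0 \<subseteq> Vs" unfolding D0_def using g0V by (auto intro: span_diff span_base)
  then have "span D0 \<subseteq> Vs" by (rule span_minimal[OF _ subspace_span])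
  moreover have "PJ \<subseteq> span PJ" by (rule span_superset)
  ultimately show ?thesis using eq by simp
qed

lemma in_Vs:
  assumes "\<forall>i\<in>I. coeff \<alpha> n x i = s * m i" shows "x \<in> Vs"
proof -
  have "\<forall>i\<in>I. coeff \<alpha> n (x - s *\<^sub>R g0) i = 0"
    using assms g0_coeff by (simp add: local.coeff_diff coeff_scale)
  then have "x - s *\<^sub>R g0 \<in> span PJ" by (rule zeroI_in_PJ)
  moreover have "span PJ \<subseteq> Vs" by (rule span_minimal[OF PJ_Vs subspace_span])
  ultimately have "x - s *\<^sub>R g0 \<in> Vs" by blast
  moreover have "s *\<^sub>R g0 \<in> Vs" using g0V by (simp add: span_base span_scale)
  ultimately have "(x - s *\<^sub>R g0) + s *\<^sub>R g0 \<in> Vs" by (rule span_add)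
  then show ?thesis by simp
qed

lemma S_in_Vs: "x \<in> S_set \<Phi> \<alpha> n I b \<Longrightarrow> x \<in> Vs"
  using in_Vs[of x "1 / b"] by (simp add: S_char)

lemma weyl_Vs: "w \<in> weyl_group V \<Longrightarrow> y \<in> Vs \<Longrightarrow> w y \<in> Vs"
proof (induction w rule: weyl_group.induct)
  case weyl_id then show ?case by simp
next
  case (weyl_step w \<gamma>)
  then have "w y \<in> Vs" by simp
  then show ?case using weyl_step(2)
    by (simp add: reflect_def span_diff span_scale span_base)
qed

lemma weyl_Phi: "w \<in> weyl_group V \<Longrightarrow> y \<in> \<Phi> \<Longrightarrow> w y \<in> \<Phi>"
proof (induction w rule: weyl_group.induct)
  case weyl_id then show ?case by simp
next
  case (weyl_step w \<gamma>)
  then show ?case using reflPhi V_sub by auto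
qed

lemma weyl_t: "w \<in> weyl_group V \<Longrightarrow> y \<in> \<Phi> \<Longrightarrow> t y \<in> \<int> \<Longrightarrow> t (w y) \<in> \<int>"
proof (induction w rule: weyl_group.induct)
  case weyl_id then show ?case by simp
next
  case (weyl_step w \<gamma>)
  have wy: "w y \<in> \<Phi>" using weyl_Phi weyl_step by blast
  have g: "\<gamma> \<in> \<Phi>" using weyl_step V_sub by auto
  have c: "2 * (w y \<bullet> \<gamma>) / (\<gamma> \<bullet> \<gamma>) \<in> \<int>" using cartan[OF g wy] .
  have "t ((reflect \<gamma> \<circ> w) y) = t (w y) - 2 * (w y \<bullet> \<gamma>) / (\<gamma> \<bullet> \<gamma>)"
    using t_V[OF weyl_step(2)] by (simp add: reflect_def t_diff t_scale)
  then show ?case using weyl_step c by (simp add: Ints_diff)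
qed

lemma gen_Vs: "gen_subsystem V \<subseteq> Vs"
  unfolding gen_subsystem_def using weyl_Vs by (auto intro: span_base)

lemma V_gen: "V \<subseteq> gen_subsystem V"
proof
  fix x assume "x \<in> V"
  then show "x \<in> gen_subsystem V" unfolding gen_subsystem_def
    by (intro CollectI exI[of _ id] exI[of _ x]) (simp add: weyl_group.weyl_id)
qed

lemma span_gen: "span (gen_subsystem V) = Vs"
proof
  show "span (gen_subsystem V) \<subseteq> Vs" by (rule span_minimal[OF gen_Vs subspace_span])
  show "Vs \<subseteq> span (gen_subsystem V)" by (rule span_mono[OF V_gen])
qed

lemma par_eq: "par_closure \<Phi> (gen_subsystem V) = Vs \<inter> \<Phi>"
  by (simp add: par_closure_def span_gen)

lemma gen_sub_par: "gen_subsystem V \<subseteq> Vs \<inter> \<Phi>"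
  using gen_Vs weyl_Phi V_sub unfolding gen_subsystem_def by blast

lemma d_ge1: "d \<ge> 1"
proof -
  have "g0 \<in> S_set \<Phi> \<alpha> n I 1" using g0V g0_coeff V_sub by (auto simp: S_char)
  then have "S_set \<Phi> \<alpha> n I 1 \<noteq> {}" by blast
  then show ?thesis using dmax by simp
qed

end



lemma Gcd_int_mult:
  fixes r :: real
  assumes "finite A" "\<forall>a\<in>A. r * of_int a \<in> \<int>"
  shows "r * of_int (Gcd A) \<in> \<int>"
  using assms
proof (induction A rule: finite_induct)
  case empty then show ?case by simp
next
  case (insert a A)
  obtain u v where uv: "u * a + v * Gcd A = gcd a (Gcd A)" using bezout_int by blast
  have "r * of_int (Gcd (insert a A)) = of_int u * (r * of_int a) + of_int v * (r * of_int (Gcd A))"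
    using uv[symmetric] by (simp add: algebra_simps)
  also have "\<dots> \<in> \<int>"
  proof -
    have ha: "r * of_int a \<in> \<int>" using insert by simp
    have hA: "r * of_int (Gcd A) \<in> \<int>" using insert by simp
    show ?thesis using Ints_add[OF Ints_mult[OF Ints_of_int ha] Ints_mult[OF Ints_of_int hA]] .
  qed
  finally show ?case .
qed

lemma int_01: "(r::real) \<in> \<int> \<Longrightarrow> 0 < r \<Longrightarrow> r \<le> 1 \<Longrightarrow> r = 1"
  by (elim Ints_cases) auto

context RSI begin

lemma gen_mem: "w \<in> weyl_group V \<Longrightarrow> v \<in> V \<Longrightarrow> w v \<in> gen_subsystem V"
  unfolding gen_subsystem_def by blast

lemma part2_fwd:
  assumes eq: "gen_subsystem V = par_closure \<Phi> (gen_subsystem V)"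
  shows "d = 1"
proof -
  obtain \<gamma> where g: "\<gamma> \<in> S_set \<Phi> \<alpha> n I d" using Sd by blast
  have "\<gamma> \<in> Vs \<inter> \<Phi>" using S_in_Vs[OF g] g by (simp add: S_char)
  then have "\<gamma> \<in> gen_subsystem V" using eq par_eq by simp
  then obtain w v where wv: "w \<in> weyl_group V" "v \<in> V" "\<gamma> = w v" unfolding gen_subsystem_def by blast
  have "t \<gamma> \<in> \<int>" using weyl_t[OF wv(1)] wv V_sub t_V by auto
  moreover have "t \<gamma> = 1 / d" using g i0 by (simp add: S_char t_def)
  ultimately have "1 / d \<in> \<int>" by simp
  then have "1 / d = 1" using d_ge1 dpos by (intro int_01) auto
  then show "d = 1" by (simp add: field_simps)
qed

context
  assumes irr: "irreducible_root_system \<Phi>" and d1: "d = 1"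
begin

lemma t_pos_cases:
  assumes x: "x \<in> Vs" "x \<in> pos_roots \<Phi> \<alpha> n" shows "t x = 0 \<or> t x = 1"
proof -
  have "t x \<ge> 0" using pos_nonneg[OF x(2), of i0] i0 by (simp add: t_def)
  moreover have "t x \<le> 1" using hmult_bound[OF irr x(2) i0n] i0 by (simp add: t_def)
  moreover have "t x > 0 \<Longrightarrow> t x \<ge> 1"
  proof -
    assume tp: "t x > 0"
    have "x \<in> S_set \<Phi> \<alpha> n I (1 / t x)"
      using Vs_coeff[OF x(1)] pos_in[OF x(2)] by (simp add: S_char)
    then have "S_set \<Phi> \<alpha> n I (1 / t x) \<noteq> {}" by blast
    moreover have "1 / t x > 0" using tp by simp
    ultimately have "1 / t x \<le> d" using dmax by blast
    then show "t x \<ge> 1" using tp d1 by (simp add: field_simps)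
  qed
  ultimately show ?thesis by linarith
qed

lemma t_cases:
  assumes x: "x \<in> Vs" "x \<in> \<Phi>"
  shows "(x \<in> pos_roots \<Phi> \<alpha> n \<and> (t x = 0 \<or> t x = 1)) \<or> (- x \<in> pos_roots \<Phi> \<alpha> n \<and> (t x = 0 \<or> t x = -1))"
proof -
  have "- x \<in> Vs" using x by (simp add: span_neg)
  then show ?thesis using pos_or_neg[OF x(2)] t_pos_cases x t_neg[of x] by force
qed

lemma t1_V: assumes x: "x \<in> Vs" "x \<in> \<Phi>" "t x = 1" shows "x \<in> V"
proof -
  have "x \<in> pos_roots \<Phi> \<alpha> n" using t_cases[OF x(1,2)] x(3) by auto
  then show ?thesis using V_char Vs_coeff[OF x(1)] x(3) by simp
qed

lemma part2_bwd: "Vs \<inter> \<Phi> \<subseteq> gen_subsystem V"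
proof
  fix x assume "x \<in> Vs \<inter> \<Phi>"
  then have x: "x \<in> Vs" "x \<in> \<Phi>" by auto
  have mx: "- x \<in> Vs" "- x \<in> \<Phi>" using x by (auto simp: span_neg negPhi)
  have xn: "x \<noteq> 0" using x zPhi by auto
  have "t x = 0 \<or> t x = 1 \<or> t x = -1" using t_cases[OF x] by auto
  moreover
  { assume "t x = 1"
    then have "x \<in> V" using t1_V x by blast
    then have "x \<in> gen_subsystem V" using V_gen by blast }
  moreover
  { assume "t x = -1"
    then have v: "- x \<in> V" using t1_V[OF mx] t_neg by simp
    have "x = (reflect (- x) \<circ> id) (- x)" using neg_refl[of "- x"] xn by simp
    moreover have "reflect (- x) \<circ> id \<in> weyl_group V" using v by (intro weyl_group.intros)
    ultimately have "x \<in> gen_subsystem V" using gen_mem v by metis }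
  moreover
  { assume t0: "t x = 0"
    obtain \<gamma> where g: "\<gamma> \<in> V" "x \<bullet> \<gamma> \<noteq> 0"
    proof (rule ccontr)
      assume "\<not> thesis"
      then have "\<And>y. y \<in> V \<Longrightarrow> y \<bullet> x = 0" using that by (metis inner_commute)
      then have "x \<bullet> x = 0" using orth_span[OF x(1)] by blast
      then show False using xn by simp
    qed
    have gP: "\<gamma> \<in> \<Phi>" using g V_sub by auto
    have gn: "\<gamma> \<noteq> 0" using gP zPhi by auto
    define c where "c = 2 * (x \<bullet> \<gamma>) / (\<gamma> \<bullet> \<gamma>)"
    have cZ: "c \<in> \<int>" using cartan[OF gP x(2)] by (simp add: c_def)
    have c0: "c \<noteq> 0" using g gn by (simp add: c_def)
    define \<eta> where "\<eta> = reflect \<gamma> x"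
    have eta: "\<eta> = x - c *\<^sub>R \<gamma>" by (simp add: \<eta>_def reflect_def c_def)
    have etaP: "\<eta> \<in> \<Phi>" using reflPhi[OF gP x(2)] by (simp add: \<eta>_def)
    have etaV: "\<eta> \<in> Vs" using eta x g by (simp add: span_diff span_scale span_base)
    have teta: "t \<eta> = - c" using eta t0 t_V[OF g(1)] by (simp add: t_diff t_scale)
    have xeta: "x = reflect \<gamma> \<eta>" using reflect_invol[OF gn] by (simp add: \<eta>_def)
    have "t \<eta> = 0 \<or> t \<eta> = 1 \<or> t \<eta> = -1" using t_cases[OF etaV etaP] by auto
    then have "c = -1 \<or> c = 1" using teta c0 by auto
    then have "x \<in> gen_subsystem V"
    proof
      assume "c = -1"
      then have "\<eta> \<in> V" using t1_V[OF etaV etaP] teta by simp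
      moreover have "x = (reflect \<gamma> \<circ> id) \<eta>" using xeta by simp
      moreover have "reflect \<gamma> \<circ> id \<in> weyl_group V" using g by (intro weyl_group.intros)
      ultimately show ?thesis using gen_mem by metis
    next
      assume "c = 1"
      have mV: "- \<eta> \<in> Vs" "- \<eta> \<in> \<Phi>" using etaV etaP by (auto simp: span_neg negPhi)
      have v: "- \<eta> \<in> V" using t1_V[OF mV] teta \<open>c = 1\<close> t_neg by simp
      have en: "- \<eta> \<noteq> 0" using mV zPhi by auto
      have "\<eta> = reflect (- \<eta>) (- \<eta>)" using neg_refl[OF en] by simp
      then have "x = (reflect \<gamma> \<circ> (reflect (- \<eta>) \<circ> id)) (- \<eta>)" using xeta by simp
      moreover have "reflect \<gamma> \<circ> (reflect (- \<eta>) \<circ> id) \<in> weyl_group V"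
        using g v by (intro weyl_group.intros)
      ultimately show ?thesis using gen_mem v by metis
    qed }
  ultimately show "x \<in> gen_subsystem V" by blast
qed

end

lemma part2: "irreducible_root_system \<Phi> \<Longrightarrow>
   (gen_subsystem V = par_closure \<Phi> (gen_subsystem V) \<longleftrightarrow> d = 1)"
  using part2_fwd part2_bwd gen_sub_par par_eq by blast

lemma part3: assumes "Gcd ((\<lambda>i. \<lfloor>m i\<rfloor>) ` I) = 1" shows "d = 1"
proof -
  obtain \<gamma> where g: "\<gamma> \<in> S_set \<Phi> \<alpha> n I d" using Sd by blast
  have finI: "finite I" using I_sub finite_subset by blast
  have "\<forall>a\<in>(\<lambda>i. \<lfloor>m i\<rfloor>) ` I. (1 / d) * of_int a \<in> \<int>"
  proof
    fix a assume "a \<in> (\<lambda>i. \<lfloor>m i\<rfloor>) ` I"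
    then obtain i where i: "i \<in> I" "a = \<lfloor>m i\<rfloor>" by blast
    obtain k :: nat where k: "m i = of_nat k" using m_nat[OF i(1)] by (meson Nats_cases)
    have "of_int a = m i" using i(2) k by simp
    moreover have "coeff \<alpha> n \<gamma> i \<in> \<int>" using root_coeff(1) g by (simp add: S_char)
    moreover have "coeff \<alpha> n \<gamma> i = m i / d" using g i(1) by (simp add: S_char)
    ultimately show "(1 / d) * of_int a \<in> \<int>" by simp
  qed
  then have "(1 / d) * of_int (Gcd ((\<lambda>i. \<lfloor>m i\<rfloor>) ` I)) \<in> \<int>" using finI by (intro Gcd_int_mult) auto
  then have "1 / d \<in> \<int>" using assms by simp
  then have "1 / d = 1" using d_ge1 dpos by (intro int_01) auto
  then show "d = 1" by (simp add: field_simps)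
qed

end



context RSI begin

definition P where "P = Vs \<inter> pos_roots \<Phi> \<alpha> n"
definition Dc where "Dc = {x\<in>P. \<not> (\<exists>y\<in>P. \<exists>z\<in>P. x = y + z)}"

lemma P_pos: "x \<in> P \<Longrightarrow> x \<in> pos_roots \<Phi> \<alpha> n" by (simp add: P_def)
lemma P_Vs: "x \<in> P \<Longrightarrow> x \<in> Vs" by (simp add: P_def)
lemma P_Phi: "x \<in> P \<Longrightarrow> x \<in> \<Phi>" using P_pos pos_in by blast
lemma finP: "finite P" using finPhi by (rule finite_subset[rotated]) (auto simp: P_Phi)
lemma Dc_P: "Dc \<subseteq> P" by (auto simp: Dc_def)
lemma finDc: "finite Dc" using finP Dc_P finite_subset by blast

lemma ht0: "ht 0 = 0" by (simp add: ht_def coeff_zero)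
lemma ht_neg: "ht (- x) = - ht x" by (simp add: ht_def coeff_neg sum_negf)

lemma LA: "x \<in> P \<Longrightarrow> \<exists>k. (\<forall>e\<in>Dc. k e \<in> \<nat>) \<and> x = (\<Sum>e\<in>Dc. k e *\<^sub>R e)"
proof (induction "nat \<lfloor>ht x\<rfloor>" arbitrary: x rule: less_induct)
  case less
  show ?case
  proof (cases "x \<in> Dc")
    case True
    have "(\<Sum>e\<in>Dc. (if e = x then 1 else 0) *\<^sub>R e) = (\<Sum>e\<in>Dc. if e = x then e else 0)"
      by (rule sum.cong) auto
    also have "\<dots> = x" using True finDc by (simp add: sum.delta)
    finally show ?thesis by (intro exI[of _ "\<lambda>e. if e = x then 1 else 0"]) auto
  next
    case False
    then obtain y z where yz: "y \<in> P" "z \<in> P" "x = y + z" using less.prems by (auto simp: Dc_def)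
    have h: "ht x = ht y + ht z" using yz by (simp add: ht_add)
    have hy: "ht y \<ge> 1" "ht z \<ge> 1" using ht_pos_root(2) P_pos yz by auto
    have "nat \<lfloor>ht y\<rfloor> < nat \<lfloor>ht x\<rfloor>"
      using nat_ht_less[OF P_pos[OF less.prems] P_pos[OF yz(1)]] h hy by simp
    then obtain ky where ky: "\<forall>e\<in>Dc. ky e \<in> \<nat>" "y = (\<Sum>e\<in>Dc. ky e *\<^sub>R e)" using less.hyps yz(1) by blast
    have "nat \<lfloor>ht z\<rfloor> < nat \<lfloor>ht x\<rfloor>"
      using nat_ht_less[OF P_pos[OF less.prems] P_pos[OF yz(2)]] h hy by simp
    then obtain kz where kz: "\<forall>e\<in>Dc. kz e \<in> \<nat>" "z = (\<Sum>e\<in>Dc. kz e *\<^sub>R e)" using less.hyps yz(2) by blast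
    have "x = (\<Sum>e\<in>Dc. (ky e + kz e) *\<^sub>R e)"
      using yz(3) ky(2) kz(2) by (simp add: scaleR_add_left sum.distrib)
    then show ?thesis using ky(1) kz(1) by (intro exI[of _ "\<lambda>e. ky e + kz e"]) auto
  qed
qed

lemma LB: assumes e: "e1 \<in> Dc" "e2 \<in> Dc" "e1 \<noteq> e2" shows "e1 \<bullet> e2 \<le> 0"
proof (rule ccontr)
  assume "\<not> ?thesis"
  then have gt: "e1 \<bullet> e2 > 0" by simp
  have eP: "e1 \<in> P" "e2 \<in> P" using e Dc_P by auto
  have r: "e1 - e2 \<in> \<Phi>" using F2[OF P_Phi[OF eP(1)] P_Phi[OF eP(2)] gt e(3)] .
  have v: "e1 - e2 \<in> Vs" "e2 - e1 \<in> Vs" using eP P_Vs by (auto intro: span_diff)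
  from pos_or_neg[OF r] show False
  proof
    assume "e1 - e2 \<in> pos_roots \<Phi> \<alpha> n"
    then have "e1 - e2 \<in> P" using v by (simp add: P_def)
    moreover have "e1 = e2 + (e1 - e2)" by simp
    ultimately have "\<exists>y\<in>P. \<exists>z\<in>P. e1 = y + z" using eP(2) by blast
    then show False using e(1) by (simp add: Dc_def)
  next
    assume "- (e1 - e2) \<in> pos_roots \<Phi> \<alpha> n"
    then have "e2 - e1 \<in> P" using v by (simp add: P_def)
    moreover have "e2 = e1 + (e2 - e1)" by simp
    ultimately have "\<exists>y\<in>P. \<exists>z\<in>P. e2 = y + z" using eP(1) by blast
    then show False using e(2) by (simp add: Dc_def)
  qed
qed

lemma LC: "independent Dc"
  unfolding independent_explicit
proof (intro conjI allI impI ballI)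
  show "finite Dc" by (rule finDc)
  fix u v assume z: "(\<Sum>v\<in>Dc. u v *\<^sub>R v) = 0" and v: "v \<in> Dc"
  define Pp where "Pp = {v\<in>Dc. u v > 0}"
  define Nn where "Nn = {v\<in>Dc. u v < 0}"
  have fin: "finite Pp" "finite Nn" using finDc by (auto simp: Pp_def Nn_def)
  have disj: "Pp \<inter> Nn = {}" by (auto simp: Pp_def Nn_def)
  have "(\<Sum>v\<in>Dc. u v *\<^sub>R v) = (\<Sum>v\<in>Pp \<union> Nn. u v *\<^sub>R v)"
    using finDc by (intro sum.mono_neutral_right) (auto simp: Pp_def Nn_def)
  also have "\<dots> = (\<Sum>v\<in>Pp. u v *\<^sub>R v) + (\<Sum>v\<in>Nn. u v *\<^sub>R v)"
    using fin disj by (rule sum.union_disjoint)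
  finally have "(\<Sum>v\<in>Pp. u v *\<^sub>R v) + (\<Sum>v\<in>Nn. u v *\<^sub>R v) = 0" using z by simp
  then have sN: "(\<Sum>v\<in>Pp. u v *\<^sub>R v) = (\<Sum>v\<in>Nn. (- u v) *\<^sub>R v)"
    by (simp add: sum_negf eq_neg_iff_add_eq_0)
  define s where "s = (\<Sum>v\<in>Pp. u v *\<^sub>R v)"
  have "s \<bullet> s = (\<Sum>p\<in>Pp. u p *\<^sub>R p) \<bullet> (\<Sum>q\<in>Nn. (- u q) *\<^sub>R q)" using sN by (simp add: s_def)
  also have "\<dots> = (\<Sum>p\<in>Pp. \<Sum>q\<in>Nn. (u p *\<^sub>R p) \<bullet> ((- u q) *\<^sub>R q))"
    by (simp only: inner_sum_left inner_sum_right) (rule sum.swap)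
  also have "\<dots> = (\<Sum>p\<in>Pp. \<Sum>q\<in>Nn. (u p * (- u q)) * (p \<bullet> q))"
    by (intro sum.cong refl) simp
  also have "\<dots> \<le> 0"
  proof (intro sum_nonpos)
    fix p q assume p: "p \<in> Pp" and q: "q \<in> Nn"
    have "p \<noteq> q" using p q disj by auto
    then have "p \<bullet> q \<le> 0" using LB p q by (auto simp: Pp_def Nn_def)
    moreover have "u p * (- u q) > 0" using p q by (simp add: Pp_def Nn_def mult_pos_neg)
    ultimately show "(u p * (- u q)) * (p \<bullet> q) \<le> 0" using mult_nonneg_nonpos[of "u p * (- u q)" "p \<bullet> q"] by simp
  qed
  finally have "s \<bullet> s \<le> 0" .
  then have "s \<bullet> s = 0" using inner_ge_zero[of s] by linarith
  then have s0: "s = 0" by simp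
  have htp1: "\<And>x. x \<in> Dc \<Longrightarrow> ht x \<ge> 1" using ht_pos_root(2) Dc_P P_pos by blast
  have htp: "\<And>x. x \<in> Dc \<Longrightarrow> ht x > 0" using htp1 by fastforce
  have "Pp = {}"
  proof (rule ccontr)
    assume ne: "Pp \<noteq> {}"
    have "ht s = (\<Sum>p\<in>Pp. u p * ht p)" by (simp add: s_def ht_sum ht_scale)
    also have "\<dots> > 0" using fin(1) ne htp
      by (intro sum_pos) (auto simp: Pp_def intro!: mult_pos_pos)
    finally show False using s0 ht0 by simp
  qed
  moreover have "Nn = {}"
  proof (rule ccontr)
    assume ne: "Nn \<noteq> {}"
    have "ht s = (\<Sum>q\<in>Nn. (- u q) * ht q)" by (simp add: sN s_def ht_sum ht_scale ht_neg)
    also have "\<dots> > 0" using fin(2) ne htp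
      by (intro sum_pos) (auto simp: Nn_def intro!: mult_neg_pos)
    finally show False using s0 ht0 by simp
  qed
  ultimately have "\<not> u v > 0" "\<not> u v < 0" using v by (auto simp: Pp_def Nn_def)
  then show "u v = 0" by linarith
qed

lemma LD: "PJ \<subseteq> Dc"
proof
  fix x assume "x \<in> PJ"
  then obtain j where j: "j \<in> J" "x = \<alpha> j" by auto
  have j1: "j \<in> {1..n}" using j by auto
  have xP: "x \<in> P" using j PJ_Vs alpha_pos[OF j1] by (auto simp: P_def)
  have "\<not> (\<exists>y\<in>P. \<exists>z\<in>P. x = y + z)"
  proof
    assume "\<exists>y\<in>P. \<exists>z\<in>P. x = y + z"
    then obtain y z where yz: "y \<in> P" "z \<in> P" "x = y + z" by blast
    have "ht x = ht y + ht z" using yz by (simp add: ht_add)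
    moreover have "ht y \<ge> 1" "ht z \<ge> 1" using ht_pos_root(2) P_pos yz by auto
    moreover have "ht x = 1" using j ht_alpha[OF j1] by simp
    ultimately show False by simp
  qed
  then show "x \<in> Dc" using xP by (simp add: Dc_def)
qed

lemma LE: "card Dc \<le> card J + 1"
proof -
  have sub: "V \<subseteq> span (insert g0 PJ)"
  proof
    fix v assume v: "v \<in> V"
    then have "\<forall>i\<in>I. coeff \<alpha> n (v - g0) i = 0" using V_char g0_coeff by (simp add: local.coeff_diff)
    then have "v - g0 \<in> span PJ" by (rule zeroI_in_PJ)
    then have "v - g0 \<in> span (insert g0 PJ)" using span_mono[of PJ "insert g0 PJ"] by blast
    moreover have "g0 \<in> span (insert g0 PJ)" by (simp add: span_base)
    ultimately have "(v - g0) + g0 \<in> span (insert g0 PJ)" by (rule span_add)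
    then show "v \<in> span (insert g0 PJ)" by simp
  qed
  then have "Vs \<subseteq> span (insert g0 PJ)" by (rule span_minimal[OF _ subspace_span])
  then have "dim Vs \<le> card (insert g0 PJ)" by (intro dim_le_card) auto
  also have "\<dots> \<le> card PJ + 1" by (simp add: card_insert_if)
  finally have "dim Vs \<le> card J + 1" using cardPJ by simp
  moreover have "card Dc \<le> dim Vs" using LC Dc_P by (intro independent_card_le_dim) (auto simp: P_def)
  ultimately show ?thesis by simp
qed

lemma span_PJ_i0: "x \<in> span PJ \<Longrightarrow> coeff \<alpha> n x i0 = 0"
proof (induction rule: span_induct_alt)
  case base then show ?case by (simp add: coeff_zero)
next
  case (step c x y)
  then obtain j where "j \<in> J" "x = \<alpha> j" by auto
  then show ?case using step i0 by (auto simp: local.coeff_add coeff_scale coeff_alpha)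
qed

lemma LF: "\<exists>\<beta>. Dc = insert \<beta> PJ \<and> \<beta> \<notin> PJ"
proof -
  have "Dc - PJ \<noteq> {}"
  proof
    assume "Dc - PJ = {}"
    then have DsP: "Dc \<subseteq> PJ" by auto
    have gP: "g0 \<in> P" using g0V V_char by (auto simp: P_def span_base)
    obtain k where "g0 = (\<Sum>e\<in>Dc. k e *\<^sub>R e)" using LA[OF gP] by blast
    then have "g0 \<in> span Dc" by (simp add: span_base span_scale span_sum)
    then have "g0 \<in> span PJ" using span_mono[OF DsP] by blast
    then have "coeff \<alpha> n g0 i0 = 0" by (rule span_PJ_i0)
    then show False using g0_coeff[OF i0(1)] i0(2) by simp
  qed
  then obtain \<beta> where b: "\<beta> \<in> Dc" "\<beta> \<notin> PJ" by blast
  have "Dc = insert \<beta> PJ"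
  proof (rule ccontr)
    assume "Dc \<noteq> insert \<beta> PJ"
    then obtain \<beta>' where b': "\<beta>' \<in> Dc" "\<beta>' \<notin> PJ" "\<beta>' \<noteq> \<beta>" using LD b by blast
    have finPJ: "finite PJ" by simp
    have "insert \<beta> (insert \<beta>' PJ) \<subseteq> Dc" using b b' LD by auto
    then have "card (insert \<beta> (insert \<beta>' PJ)) \<le> card Dc" using finDc by (rule card_mono[rotated])
    moreover have "card (insert \<beta> (insert \<beta>' PJ)) = card PJ + 2" using b b' finPJ by simp
    ultimately show False using LE cardPJ by simp
  qed
  then show ?thesis using b by blast
qed

lemma t_sum: "t (\<Sum>e\<in>A. f e) = (\<Sum>e\<in>A. t (f e))"
  by (simp add: t_def local.coeff_sum sum_divide_distrib)

end



context RSI begin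

lemma part1: "\<exists>a\<in>S_set \<Phi> \<alpha> n I d. (\<forall>\<gamma>\<in>S_set \<Phi> \<alpha> n I d. root_le \<alpha> n a \<gamma>) \<and>
            is_root_basis (par_closure \<Phi> (gen_subsystem V)) (insert a PJ)"
proof -
  obtain \<beta> where D\<beta>: "Dc = insert \<beta> PJ" "\<beta> \<notin> PJ" using LF by blast
  have \<beta>P: "\<beta> \<in> P" using D\<beta> Dc_P by auto
  have finPJ: "finite PJ" by simp
  have tsum: "t x = k \<beta> * t \<beta>" if x: "x = (\<Sum>e\<in>Dc. k e *\<^sub>R e)" for x k
  proof -
    have "t x = (\<Sum>e\<in>Dc. k e * t e)" using x by (simp add: t_sum t_scale)
    also have "\<dots> = k \<beta> * t \<beta> + (\<Sum>e\<in>PJ. k e * t e)" using D\<beta> finPJ by simp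
    also have "(\<Sum>e\<in>PJ. k e * t e) = 0" using t_alphaJ by (intro sum.neutral) auto
    finally show ?thesis by simp
  qed
  have tb0: "t \<beta> \<ge> 0" using pos_nonneg[OF P_pos[OF \<beta>P], of i0] i0 by (simp add: t_def)
  have "t \<beta> \<noteq> 0"
  proof
    assume "t \<beta> = 0"
    then have "\<forall>i\<in>I. coeff \<alpha> n \<beta> i = 0" using Vs_coeff[OF P_Vs[OF \<beta>P]] by simp
    then have "\<beta> \<in> span PJ" by (rule zeroI_in_PJ)
    moreover have "Dc - {\<beta>} = PJ" using D\<beta> by auto
    ultimately have "dependent Dc" unfolding dependent_def using D\<beta> by auto
    then show False using LC by simp
  qed
  then have tb: "t \<beta> > 0" using tb0 by simp
  have "\<beta> \<in> S_set \<Phi> \<alpha> n I (1 / t \<beta>)"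
    using Vs_coeff[OF P_Vs[OF \<beta>P]] P_Phi[OF \<beta>P] by (simp add: S_char)
  then have "S_set \<Phi> \<alpha> n I (1 / t \<beta>) \<noteq> {}" by blast
  then have le1: "1 / t \<beta> \<le> d" using dmax tb by simp
  have SdP: "\<gamma> \<in> P \<and> t \<gamma> = 1 / d" if g: "\<gamma> \<in> S_set \<Phi> \<alpha> n I d" for \<gamma>
  proof -
    have gc: "coeff \<alpha> n \<gamma> i0 = m i0 / d" "\<gamma> \<in> \<Phi>" using g i0 by (auto simp: S_char)
    then have "coeff \<alpha> n \<gamma> i0 > 0" using i0 dpos by simp
    then have "\<gamma> \<in> pos_roots \<Phi> \<alpha> n" using pos_by_coeff[OF gc(2) i0n] by simp
    then show ?thesis using S_in_Vs[OF g] gc i0 by (simp add: P_def t_def)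
  qed
  obtain \<gamma>1 where g1: "\<gamma>1 \<in> S_set \<Phi> \<alpha> n I d" using Sd by blast
  obtain k1 where k1: "\<forall>e\<in>Dc. k1 e \<in> \<nat>" "\<gamma>1 = (\<Sum>e\<in>Dc. k1 e *\<^sub>R e)" using LA SdP[OF g1] by blast
  have eq1: "k1 \<beta> * t \<beta> = 1 / d" using tsum[OF k1(2)] SdP[OF g1] by simp
  have "k1 \<beta> \<in> \<nat>" using k1(1) D\<beta> by auto
  then obtain K :: nat where K: "k1 \<beta> = of_nat K" by (rule Nats_cases)
  have "K \<noteq> 0"
  proof
    assume "K = 0"
    then have "1 / d = 0" using eq1 K by simp
    then show False using dpos by simp
  qed
  then have "k1 \<beta> \<ge> 1" using K by simp
  then have "k1 \<beta> * t \<beta> \<ge> t \<beta>" using tb by (simp add: mult_le_cancel_right1)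
  then have "t \<beta> \<le> 1 / d" using eq1 by simp
  moreover have "t \<beta> \<ge> 1 / d" using le1 tb dpos by (simp add: field_simps)
  ultimately have tbd: "t \<beta> = 1 / d" by simp
  have \<beta>Sd: "\<beta> \<in> S_set \<Phi> \<alpha> n I d"
    using Vs_coeff[OF P_Vs[OF \<beta>P]] P_Phi[OF \<beta>P] tbd by (simp add: S_char)
  have minimal: "root_le \<alpha> n \<beta> \<gamma>" if g: "\<gamma> \<in> S_set \<Phi> \<alpha> n I d" for \<gamma>
  proof -
    obtain k where k: "\<forall>e\<in>Dc. k e \<in> \<nat>" "\<gamma> = (\<Sum>e\<in>Dc. k e *\<^sub>R e)" using LA SdP[OF g] by blast
    have "k \<beta> * t \<beta> = t \<beta>" using tsum[OF k(2)] SdP[OF g] tbd by simp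
    then have kb: "k \<beta> = 1" using tb by simp
    have "\<gamma> = \<beta> + (\<Sum>e\<in>PJ. k e *\<^sub>R e)" using k(2) D\<beta> finPJ kb by simp
    then have gb: "\<gamma> - \<beta> = (\<Sum>e\<in>PJ. k e *\<^sub>R e)" by simp
    show ?thesis unfolding root_le_def
    proof
      fix i assume "i \<in> {1..n}"
      have "coeff \<alpha> n \<gamma> i - coeff \<alpha> n \<beta> i = coeff \<alpha> n (\<gamma> - \<beta>) i" by (simp add: local.coeff_diff)
      also have "\<dots> = (\<Sum>e\<in>PJ. k e * coeff \<alpha> n e i)" using gb by (simp add: local.coeff_sum coeff_scale)
      also have "\<dots> \<in> \<nat>"
      proof (rule Nats_sumR)
        fix e assume e: "e \<in> PJ"
        then obtain j where j: "j \<in> {1..n}" "e = \<alpha> j" by auto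
        have "k e \<in> \<nat>" using k(1) e D\<beta> by auto
        moreover have "coeff \<alpha> n e i \<in> \<nat>" using j coeff_alpha[OF j(1), of i] by simp
        ultimately show "k e * coeff \<alpha> n e i \<in> \<nat>" by simp
      qed
      finally show "coeff \<alpha> n \<gamma> i - coeff \<alpha> n \<beta> i \<in> \<nat>" .
    qed
  qed
  have basis: "is_root_basis (par_closure \<Phi> (gen_subsystem V)) (insert \<beta> PJ)"
    unfolding is_root_basis_def par_eq D\<beta>(1)[symmetric]
  proof (intro conjI ballI)
    show "Dc \<subseteq> Vs \<inter> \<Phi>" using Dc_P P_Vs P_Phi by auto
    show "independent Dc" by (rule LC)
    fix \<psi> assume \<psi>: "\<psi> \<in> Vs \<inter> \<Phi>"
    have "\<psi> \<in> pos_roots \<Phi> \<alpha> n \<or> - \<psi> \<in> pos_roots \<Phi> \<alpha> n" using pos_or_neg \<psi> by blast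
    then show "\<exists>c. (\<forall>b\<in>Dc. c b \<in> \<int>) \<and> ((\<forall>b\<in>Dc. 0 \<le> c b) \<or> (\<forall>b\<in>Dc. c b \<le> 0)) \<and>
      \<psi> = (\<Sum>b\<in>Dc. c b *\<^sub>R b)"
    proof (elim disjE)
      assume "\<psi> \<in> pos_roots \<Phi> \<alpha> n"
      then have "\<psi> \<in> P" using \<psi> by (simp add: P_def)
      then obtain k where k: "\<forall>e\<in>Dc. k e \<in> \<nat>" "\<psi> = (\<Sum>e\<in>Dc. k e *\<^sub>R e)" using LA by blast
      then show ?thesis
        by (intro exI[of _ k]) (auto simp: Nats_altdef2 intro: subsetD[OF Nats_subset_Ints])
    next
      assume "- \<psi> \<in> pos_roots \<Phi> \<alpha> n"
      then have "- \<psi> \<in> P" using \<psi> by (simp add: P_def span_neg)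
      then obtain k where k: "\<forall>e\<in>Dc. k e \<in> \<nat>" "- \<psi> = (\<Sum>e\<in>Dc. k e *\<^sub>R e)" using LA by blast
      then have "\<psi> = - (\<Sum>e\<in>Dc. k e *\<^sub>R e)" by (metis minus_minus)
      then have "\<psi> = (\<Sum>e\<in>Dc. (- k e) *\<^sub>R e)" by (simp add: sum_negf)
      then show ?thesis using k(1)
        by (intro exI[of _ "\<lambda>e. - k e"]) (auto simp: Nats_altdef2)
    qed
  qed
  show ?thesis using \<beta>Sd minimal basis by blast
qed

end

theorem lemma3p3:
  fixes \<Phi> :: "'a::euclidean_space set" and \<alpha> :: "nat \<Rightarrow> 'a" and n :: nat
    and I :: "nat set" and d :: real
  assumes "crystallographic_root_system \<Phi>"
    and "irreducible_root_system \<Phi>"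
    and "simple_roots \<Phi> \<alpha> n"
    and "I \<subseteq> {1..n}"
    and "aff_dim (convex hull (face_vertices \<Phi> \<alpha> n I)) = int n - int (card I)"
    and "d > 0"
    and "S_set \<Phi> \<alpha> n I d \<noteq> {}"
    and "\<forall>b>0. S_set \<Phi> \<alpha> n I b \<noteq> {} \<longrightarrow> b \<le> d"
  shows "(\<exists>a\<in>S_set \<Phi> \<alpha> n I d. (\<forall>\<gamma>\<in>S_set \<Phi> \<alpha> n I d. root_le \<alpha> n a \<gamma>) \<and>
            is_root_basis (par_closure \<Phi> (gen_subsystem (face_vertices \<Phi> \<alpha> n I)))
                          (insert a (\<alpha> ` ({1..n} - I))))
       \<and> (gen_subsystem (face_vertices \<Phi> \<alpha> n I)
             = par_closure \<Phi> (gen_subsystem (face_vertices \<Phi> \<alpha> n I)) \<longleftrightarrow> d = 1)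
       \<and> (Gcd ((\<lambda>i. \<lfloor>hmult \<Phi> \<alpha> n i\<rfloor>) ` I) = 1 \<longrightarrow>
            gen_subsystem (face_vertices \<Phi> \<alpha> n I)
             = par_closure \<Phi> (gen_subsystem (face_vertices \<Phi> \<alpha> n I)))"
proof -
  have "RSI \<Phi> \<alpha> n I d" unfolding RSI_def RSI_axioms_def RS_def using assms by auto
  then interpret RSI \<Phi> \<alpha> n I d .
  show ?thesis using part1 part2[OF assms(2)] part3 by blast
qed



end
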